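(* Let $T$ be the set of $(a_0,\dots,a_9)\in\mathbb{R}^{10}$ such that $P(x,a)=x^{11}-x^{10}+a_9x^9+\cdots+a_0$ satisfies $a_9,a_8,a_7,a_6<0$, $a_5,\dots,a_1>0$, $a_0<0$ and has exactly one positive and exactly eight negative roots, all simple. Suppose $T\ne\emptyset$, let $\Gamma$ be a connected component of $T$, $\bar\Gamma$ its closure, and let $H$ be the set of polynomials $P(x,a)$, $a\in\bar\Gamma$, all of whose roots are real. Then $H$ contains no polynomial having a double positive root, a simple positive root, and exactly two distinct negative roots of total multiplicity $8$, and which satisfies either $\{a_1=a_5=0\}$ or $\{a_1=a_6=0\}$. *)

theory Defs
  imports "HOL-Analysis.Analysis" "HOL-Computational_Algebra.Polynomial"
begin

definition coef :: "real^10 \<Rightarrow> nat \<Rightarrow> real" where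
  "coef a j = a $ (of_nat j :: 10)"

definition Pa :: "real^10 \<Rightarrow> real poly" where
  "Pa a = monom 1 11 - monom 1 10 + (\<Sum>j<10. monom (coef a j) j)"

definition all_roots_real :: "real poly \<Rightarrow> bool" where
  "all_roots_real p \<longleftrightarrow>
     (\<forall>z::complex. poly (map_poly complex_of_real p) z = 0 \<longrightarrow> z \<in> \<real>)"

definition Tset :: "(real^10) set" where
  "Tset = {a. coef a 9 < 0 \<and> coef a 8 < 0 \<and> coef a 7 < 0 \<and> coef a 6 < 0
            \<and> (\<forall>j\<in>{1..5}. coef a j > 0) \<and> coef a 0 < 0
            \<and> card {x::real. x > 0 \<and> poly (Pa a) x = 0} = 1
            \<and> card {x::real. x < 0 \<and> poly (Pa a) x = 0} = 8
            \<and> (\<forall>x::real. poly (Pa a) x = 0 \<longrightarrow> order x (Pa a) = 1)}"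

end

theory Submission
  imports Defs
begin

lemma reflect_lin: "reflect_poly [:-r,1:] = [:1, -(r::real):]"
  by (rule poly_eqI) (auto simp: coeff_reflect_poly coeff_pCons split: nat.split)

lemma lin_smult: "(r::real) \<noteq> 0 \<Longrightarrow> [:1, -r:] = smult (-r) [:-(1/r),1:]"
  by simp

lemma order_shift:
  fixes q :: "real poly"
  assumes "x \<noteq> r" "q \<noteq> 0"
  shows "order x ([:-r,1:]^n * q) = order x q"
proof -
  have "[:-r,1:]^n \<noteq> 0" by simp
  then have "order x ([:-r,1:]^n * q) = order x ([:-r,1:]^n) + order x q"
    using assms by (simp add: order_mult)
  moreover have "order x ([:-r,1:]^n) = 0"
    using assms by (intro order_0I) (simp add: poly_power)
  ultimately show ?thesis by simp
qed

lemma peel: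
  fixes q :: "real poly"
  assumes "q \<noteq> 0"
  obtains q' where "q = [:-r,1:]^(order r q) * q'" "q' \<noteq> 0"
proof -
  from order_1[of r q] obtain q' where "q = [:-r,1:]^(order r q) * q'" by (elim dvdE)
  with assms have "q' \<noteq> 0" by auto
  with \<open>q = _\<close> show ?thesis using that by blast
qed

lemma factor4:
  fixes p :: "real poly"
  assumes p0: "p \<noteq> 0" and dg: "degree p = 11" and lc: "coeff p 11 = 1"
    and ou: "order u p = 2" and ov: "order v p = 1" and os: "order s p = k" and ot: "order t p = l"
    and kl: "k + l = 8"
    and d: "u\<noteq>v" "u\<noteq>s" "u\<noteq>t" "v\<noteq>s" "v\<noteq>t" "s\<noteq>t"
  shows "p = [:-u,1:]^2 * [:-v,1:] * [:-s,1:]^k * [:-t,1:]^l"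
proof -
  obtain q1 where q1: "p = [:-u,1:]^2 * q1" "q1 \<noteq> 0" using peel[OF p0, of u] ou by metis
  have "order v q1 = 1" using ov q1 d order_shift[of v u q1 2] by simp
  then obtain q2 where q2: "q1 = [:-v,1:] * q2" "q2 \<noteq> 0" using peel[OF q1(2), of v] by (metis power_one_right)
  have "order s q2 = k" using os q1 q2 d order_shift[of s u q1 2] order_shift[of s v q2 1] by simp
  then obtain q3 where q3: "q2 = [:-s,1:]^k * q3" "q3 \<noteq> 0" using peel[OF q2(2), of s] by metis
  have "order t q3 = l" using ot q1 q2 q3 d order_shift[of t u q1 2] order_shift[of t v q2 1]
      order_shift[of t s q3 k] by simp
  then obtain q4 where q4: "q3 = [:-t,1:]^l * q4" "q4 \<noteq> 0" using peel[OF q3(2), of t] by metis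
  define F where "F = [:-u,1:]^2 * [:-v,1:] * [:-s,1:]^k * [:-t,1:]^l"
  have pF: "p = F * q4" unfolding F_def using q1 q2 q3 q4 by (simp add: algebra_simps)
  have F0: "F \<noteq> 0" unfolding F_def by (intro no_zero_divisors power_not_zero) simp_all
  have dF: "degree F = 11" unfolding F_def using kl by (simp add: degree_mult_eq degree_power_eq del: mult_pCons_left mult_pCons_right)
  have "degree p = degree F + degree q4" using pF F0 q4 by (simp add: degree_mult_eq)
  then have "degree q4 = 0" using dg dF by simp
  then obtain c where c: "q4 = [:c:]" by (metis degree_eq_zeroE)
  have lF: "lead_coeff F = 1" unfolding F_def by (simp add: lead_coeff_mult lead_coeff_power del: mult_pCons_left mult_pCons_right)
  have "lead_coeff p = lead_coeff F * lead_coeff q4" using pF by (simp add: lead_coeff_mult)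
  then have "c = 1" using lc dg lF c by simp
  then show ?thesis using pF c F_def by simp
qed

lemma core_1:
  fixes U V a b :: real
  assumes pU: "0 < U" and pV: "0 < V" and pa: "0 < a" and pb: "0 < b"
    and c10: "coeff ([:-U,1:]^2 * [:-V,1:] * [:a,1:]^1 * [:b,1:]^7 :: real poly) 10 = 0"
    and c1: "0 < coeff ([:-U,1:]^2 * [:-V,1:] * [:a,1:]^1 * [:b,1:]^7 :: real poly) 1"
    and c7: "coeff ([:-U,1:]^2 * [:-V,1:] * [:a,1:]^1 * [:b,1:]^7 :: real poly) 7 \<le> 0"
    and c5: "0 \<le> coeff ([:-U,1:]^2 * [:-V,1:] * [:a,1:]^1 * [:b,1:]^7 :: real poly) 5"
  shows False
proof -
  have e10: "coeff ([:-U,1:]^2 * [:-V,1:] * [:a,1:]^1 * [:b,1:]^7 :: real poly) 10 = 1*a + 7*b - 2*U - V"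
    by (simp add: eval_nat_numeral; algebra)
  have rel: "1*a + 7*b = 2*U + V" using c10 e10 by simp
  have e1: "coeff ([:-U,1:]^2 * [:-V,1:] * [:a,1:]^1 * [:b,1:]^7 :: real poly) 1 = U * a^0 * b^6 * ((2*V+U)*a*b - U*V*(1*b+7*a))"
    by (simp add: eval_nat_numeral; algebra)
  have "0 < U * a^0 * b^6" using pU pa pb by simp
  then have Cpos: "0 < ((2*V+U)*a*b - U*V*(1*b+7*a))" using c1 e1 by (metis zero_less_mult_pos)
  have e7: "coeff ([:-U,1:]^2 * [:-V,1:] * [:a,1:]^1 * [:b,1:]^7 :: real poly) 7 = - (U^2*V*a) - 7*U^2*V*b + 7*U^2*a*b + 21*U^2*b^2 + 14*U*V*a*b + 42*U*V*b^2 - 42*U*a*b^2 - 70*U*b^3 - 21*V*a*b^2 - 35*V*b^3 + 35*a*b^3 + 35*b^4"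
    by (simp add: eval_nat_numeral; algebra)
  have e5: "coeff ([:-U,1:]^2 * [:-V,1:] * [:a,1:]^1 * [:b,1:]^7 :: real poly) 5 = - (21*U^2*V*a*b^2) - 35*U^2*V*b^3 + 35*U^2*a*b^3 + 35*U^2*b^4 + 70*U*V*a*b^3 + 70*U*V*b^4 - 70*U*a*b^4 - 42*U*b^5 - 35*V*a*b^4 - 21*V*b^5 + 21*a*b^5 + 7*b^6"
    by (simp add: eval_nat_numeral; algebra)
  consider "V < U" | "U < V" | "U = V" by linarith
  then show False
  proof cases
    case 1
    define S where "S = 3*V + 2*(U-V)"
    have Sp: "0 < S" using 1 pU pV unfolding S_def by simp
    define iS where "iS = 1/S"
    have iSp: "0 < iS" using Sp unfolding iS_def by simp
    have hS: "S*iS = 1" using Sp unfolding iS_def by simp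
    define w1 where "w1 = a*V*iS"
    define w2 where "w2 = a*(U-V)*iS"
    define w3 where "w3 = b*V*iS"
    define w4 where "w4 = b*(U-V)*iS"
    have w1p: "0 < w1" unfolding w1_def using iSp pa pb pU pV 1 by simp
    have w2p: "0 < w2" unfolding w2_def using iSp pa pb pU pV 1 by simp
    have w3p: "0 < w3" unfolding w3_def using iSp pa pb pU pV 1 by simp
    have w4p: "0 < w4" unfolding w4_def using iSp pa pb pU pV 1 by simp
    have ea: "a = 3*w1 + 2*w2" unfolding w1_def w2_def using hS rel unfolding S_def by algebra
    have eb: "b = 3*w3 + 2*w4" unfolding w3_def w4_def using hS rel unfolding S_def by algebra
    have eV: "V = 1*w1 + 7*w3" unfolding w1_def w2_def w3_def w4_def using hS rel unfolding S_def by algebra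
    have eU: "U = 1*w1 + 7*w3 + (1*w2 + 7*w4)" unfolding w1_def w2_def w3_def w4_def using hS rel unfolding S_def by algebra
    have key: "(- (U^2*V*a) - 7*U^2*V*b + 7*U^2*a*b + 21*U^2*b^2 + 14*U*V*a*b + 42*U*V*b^2 - 42*U*a*b^2 - 70*U*b^3 - 21*V*a*b^2 - 35*V*b^3 + 35*a*b^3 + 35*b^4) = ((1/7)*w1 + (1/7)*w2) * ((2*V+U)*a*b - U*V*(1*b+7*a)) + ((1005/7)*w1^3*w3 + (621/7)*w1^3*w4 + (2059/7)*w1^2*w2*w3 + (1291/7)*w1^2*w2*w4 + 756*w1^2*w3^2 + 967*w1^2*w3*w4 + 325*w1^2*w4^2 + (1342/7)*w1*w2^2*w3 + (862/7)*w1*w2^2*w4 + 1049*w1*w2*w3^2 + 1231*w1*w2*w3*w4 + 398*w1*w2*w4^2 + 1197*w1*w3^3 + 2387*w1*w3^2*w4 + 1239*w1*w3*w4^2 + 196*w1*w4^3 + (288/7)*w2^3*w3 + (192/7)*w2^3*w4 + 349*w2^2*w3^2 + 404*w2^2*w3*w4 + 136*w2^2*w4^2 + 805*w2*w3^3 + 1407*w2*w3^2*w4 + 798*w2*w3*w4^2 + 196*w2*w4^3 + 3570*w3^4 + 9520*w3^3*w4 + 8834*w3^2*w4^2 + 3850*w3*w4^3 + 756*w4^4)"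
      unfolding eU eV ea eb by algebra
    have lp: "0 < (1/7)*w1 + (1/7)*w2"
      by (intro add_pos_pos mult_pos_pos zero_less_power) (simp_all add: w1p w2p w3p w4p)
    have rp: "0 \<le> (1005/7)*w1^3*w3 + (621/7)*w1^3*w4 + (2059/7)*w1^2*w2*w3 + (1291/7)*w1^2*w2*w4 + 756*w1^2*w3^2 + 967*w1^2*w3*w4 + 325*w1^2*w4^2 + (1342/7)*w1*w2^2*w3 + (862/7)*w1*w2^2*w4 + 1049*w1*w2*w3^2 + 1231*w1*w2*w3*w4 + 398*w1*w2*w4^2 + 1197*w1*w3^3 + 2387*w1*w3^2*w4 + 1239*w1*w3*w4^2 + 196*w1*w4^3 + (288/7)*w2^3*w3 + (192/7)*w2^3*w4 + 349*w2^2*w3^2 + 404*w2^2*w3*w4 + 136*w2^2*w4^2 + 805*w2*w3^3 + 1407*w2*w3^2*w4 + 798*w2*w3*w4^2 + 196*w2*w4^3 + 3570*w3^4 + 9520*w3^3*w4 + 8834*w3^2*w4^2 + 3850*w3*w4^3 + 756*w4^4"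
      by (intro add_nonneg_nonneg mult_nonneg_nonneg zero_le_power) (simp_all add: w1p w2p w3p w4p less_imp_le)
    have "0 < (- (U^2*V*a) - 7*U^2*V*b + 7*U^2*a*b + 21*U^2*b^2 + 14*U*V*a*b + 42*U*V*b^2 - 42*U*a*b^2 - 70*U*b^3 - 21*V*a*b^2 - 35*V*b^3 + 35*a*b^3 + 35*b^4)" unfolding key using lp rp Cpos by (simp add: add_pos_nonneg)
    then have "0 < (- (U^2*V*a) - 7*U^2*V*b + 7*U^2*a*b + 21*U^2*b^2 + 14*U*V*a*b + 42*U*V*b^2 - 42*U*a*b^2 - 70*U*b^3 - 21*V*a*b^2 - 35*V*b^3 + 35*a*b^3 + 35*b^4)" by simp
    then show False using c7 e7 by simp
  next
    case 2
    define S where "S = 3*U + (V-U)"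
    have Sp: "0 < S" using 2 pU pV unfolding S_def by simp
    define iS where "iS = 1/S"
    have iSp: "0 < iS" using Sp unfolding iS_def by simp
    have hS: "S*iS = 1" using Sp unfolding iS_def by simp
    define w1 where "w1 = a*U*iS"
    define w2 where "w2 = a*(V-U)*iS"
    define w3 where "w3 = b*U*iS"
    define w4 where "w4 = b*(V-U)*iS"
    have w1p: "0 < w1" unfolding w1_def using iSp pa pb pU pV 2 by simp
    have w2p: "0 < w2" unfolding w2_def using iSp pa pb pU pV 2 by simp
    have w3p: "0 < w3" unfolding w3_def using iSp pa pb pU pV 2 by simp
    have w4p: "0 < w4" unfolding w4_def using iSp pa pb pU pV 2 by simp
    have ea: "a = 3*w1 + w2" unfolding w1_def w2_def using hS rel unfolding S_def by algebra
    have eb: "b = 3*w3 + w4" unfolding w3_def w4_def using hS rel unfolding S_def by algebra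
    have eV: "V = 1*w1 + 7*w3 + (1*w2 + 7*w4)" unfolding w1_def w2_def w3_def w4_def using hS rel unfolding S_def by algebra
    have eU: "U = 1*w1 + 7*w3" unfolding w1_def w2_def w3_def w4_def using hS rel unfolding S_def by algebra
    have key: "(0 - (- (21*U^2*V*a*b^2) - 35*U^2*V*b^3 + 35*U^2*a*b^3 + 35*U^2*b^4 + 70*U*V*a*b^3 + 70*U*V*b^4 - 70*U*a*b^4 - 42*U*b^5 - 35*V*a*b^4 - 21*V*b^5 + 21*a*b^5 + 7*b^6)) * (w1+w2+w3+w4)^2 = ((1347012286147189699909717705/42004033056365454511289097)*w1^4*w4 + (6222490024881138787226852360/378036297507289090601601873)*w1^3*w2*w4 + (845387081179401687048068482/6000576150909350644469871)*w1^3*w3*w4 + (34042242036843948727032197/6000576150909350644469871)*w1^3*w4^2 + (1746469091745210105139373323/5861027868330063420179874)*w1^2*w2^2*w3 + (815003575961874595872401981/126012099169096363533867291)*w1^2*w2^2*w4 + (45063924467785147727885700529/36003456905456103866819226)*w1^2*w2*w3^2 + (45579200883808279181483119/54005185358184155800228839)*w1^2*w2*w4^2 + (1911730831997659806314695/857225164415621520638553)*w1^2*w4^3 + (145418746817462884283529790/157449519994705993586673)*w1*w2^2*w3^2 + (5231855279683458489910214/157449519994705993586673)*w1*w2^2*w3*w4 + (89426235786365598979948235/2204293279925883910213422)*w1*w2*w3^2*w4 + (47651546428323275497676837/7715026479740593685746977)*w1*w2*w4^3 + (3079207890543109849705256/857225164415621520638553)*w1*w3*w4^3 + (1210/49)*w1*w4^4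 + (1458/43)*w2^2*w3^3 + (143784/1849)*w2^2*w3^2*w4 + (63366749277588130824942556/1102146639962941955106711)*w2^2*w3*w4^2 + 10*w2^2*w4^3 + (1733808228439458815120931280/7715026479740593685746977)*w2*w3^3*w4 + (754183545498404263535795581/7715026479740593685746977)*w2*w3^2*w4^2 + (66936170876460472338016517717/162015556074552467400686517)*w2*w3*w4^3 + (1651/49)*w2*w4^4 + 819*w3^5 + (26410911031285399441339919/857225164415621520638553)*w3^4*w4 + (3853315131405166000772004608/2571675493246864561915659)*w3^3*w4^2 + (11153896408029218323291995937/6000576150909350644469871)*w3^2*w4^3 + (2020/7)*w3*w4^4 + 15*w4^5) * ((2*V+U)*a*b - U*V*(1*b+7*a)) + ((1347012286147189699909717705/2000192050303116881489957)*w1^7*w4 + (74374210826071146797818820/59806406819694524695713)*w1^6*w2*w4 + 567*w1^6*w3^2 + (167947580896139802925652375290/14001344352121818170429699)*w1^6*w3*w4 + (194885171436426452384535707065/42004033056365454511289097)*w1^6*w4^2 + (1746469091745210105139373323/279096565158574448579994)*w1^5*w2^2*w3 + (44348102858506133810946486614/54005185358184155800228839)*w1^5*w2^2*w4 + (48304235589276197075899430869/1714450328831243041277106)*w1^5*w2*w3^2 + (234328455182382096880832956099/14001344352121818170429699)*w1^5*w2*w3*w4 + (1508111927006234542311717518516/378036297507289090601601873)*w1^5*w2*w4^2 + 5481*w1^5*w3^3 + (145134551142068659220387168799/2000192050303116881489957)*w1^5*w3^2*w4 + (103021362803351036498984731538/2000192050303116881489957)*w1^5*w3*w4^2 + (3492938183490420210278746646/418644847737861672869991)*w1^4*w2^3*w3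 + (16002532936423633937695676132/54005185358184155800228839)*w1^4*w2^3*w4 + (5761455331366832795438318996125/42004033056365454511289097)*w1^4*w2^2*w3^2 + (38845575096993101231246950775987/756072595014578181203203746)*w1^4*w2^2*w3*w4 + (689943660128890437096513216344/378036297507289090601601873)*w1^4*w2^2*w4^2 + (707335879709882210438218463394/2000192050303116881489957)*w1^4*w2*w3^3 + (1469798580157002298350665805388/6000576150909350644469871)*w1^4*w2*w3^2*w4 + (1917461088550898086656709171765/54005185358184155800228839)*w1^4*w2*w3*w4^2 + 10395*w1^4*w3^4 + (42685829714365949382353308561/285741721471873840212851)*w1^4*w3^3*w4 + (39728374983029127427356578487/285741721471873840212851)*w1^4*w3^2*w4^2 + (1746469091745210105139373323/837289695475723345739982)*w1^3*w2^4*w3 + (815003575961874595872401981/18001728452728051933409613)*w1^3*w2^4*w4 + (38412146789081966415064153267687/378036297507289090601601873)*w1^3*w2^3*w3^2 + (12127949125421780095619449600673/756072595014578181203203746)*w1^3*w2^3*w3*w4 + (45888804707591109604515415924/126012099169096363533867291)*w1^3*w2^3*w4^2 + (28990072639338190071931653682661/36003456905456103866819226)*w1^3*w2^2*w3^3 + (25904129439700855050946771160284/54005185358184155800228839)*w1^3*w2^2*w3^2*w4 + (851316419401981011261539750797/108010370716368311600457678)*w1^3*w2^2*w3*w4^2 + (45928007433516094220689361953/40820245924553405744693)*w1^3*w2*w3^4 + (6077010005191887152856191309111/5143350986493729123831318)*w1^3*w2*w3^3*w4 + (1753363321538877898634512228/857225164415621520638553)*w1^3*w4^5 + (14718667527890633121762079691735/756072595014578181203203746)*w1^2*w2^4*w3^2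 + (15405313635508031560283499578/378036297507289090601601873)*w1^2*w2^4*w3*w4 + (1016246930627274442466409149/126012099169096363533867291)*w1^2*w2^4*w4^2 + (2737390718857538178131835581918/7715026479740593685746977)*w1^2*w2^3*w3^3 + (1039328266240032065767887695329/7715026479740593685746977)*w1^2*w2^3*w3^2*w4 + (3230588429334048401850006426740/2571675493246864561915659)*w1^2*w2^2*w3^4 + (9965530878683413063997580512585/7715026479740593685746977)*w1^2*w2^2*w3^3*w4 + (30690140236148674979219427074/3306439919888825865320133)*w1^2*w2^2*w3*w4^3 + (5232674817663207559852749848/7715026479740593685746977)*w1^2*w2^2*w4^4 + (39061633866546965840374552423/244921475547320434468158)*w1^2*w2*w3^5 + (597162526460651061101319445316/2571675493246864561915659)*w1^2*w2*w3^4*w4 + (2248391146472651315277307846175/36003456905456103866819226)*w1^2*w2*w3^2*w4^3 + (9415233971297892409333491978866/162015556074552467400686517)*w1^2*w2*w3*w4^4 + (28858056143782494310776670046/7715026479740593685746977)*w1^2*w2*w4^5 + 184086*w1^2*w3^6 + (5095242989177621791665444273/285741721471873840212851)*w1^2*w3^5*w4 + (19384408041473603282045224394/122460737773660217234079)*w1^2*w3^4*w4^2 + (8339413527709332693469578408581/18001728452728051933409613)*w1^2*w3^3*w4^3 + (523258718848216414179590904013/2000192050303116881489957)*w1^2*w3^2*w4^4 + (48344581066678363932456079/949308044757055947551)*w1^2*w3*w4^5 + (5850/7)*w1^2*w4^6 + (149056009552483907436618568/3661616744062930083411)*w1*w2^4*w3^3 + (1045369339909181334301371916/3661616744062930083411)*w1*w2^3*w3^4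 + (207923282937497348890480284331/734764426641961303404474)*w1*w2^3*w3^3*w4 + (73732405253419598054560054610/23145079439221781057240931)*w1*w2^3*w3*w4^3 + (1647190744924764680028356417/7715026479740593685746977)*w1*w2^3*w4^4 + (6912906817811667294599699995/52483173331568664528891)*w1*w2^2*w3^5 + (3418010906893609351889880313691/15430052959481187371493954)*w1*w2^2*w3^4*w4 + (36722901205160866428889504223/734764426641961303404474)*w1*w2^2*w3^3*w4^2 + (14411167597292637536273411908144/162015556074552467400686517)*w1*w2^2*w3^2*w4^3 + (4018854975034690686120215079226/162015556074552467400686517)*w1*w2^2*w3*w4^4 + (7989610408832404376421392495/7715026479740593685746977)*w1*w2^2*w4^5 + 137151*w1*w2*w3^6 + (362907956244254723728186077053/5143350986493729123831318)*w1*w2*w3^5*w4 + (64920823323742887314377515353/367382213320980651702237)*w1*w2*w3^4*w4^2 + (56086682840497136246745286389845/108010370716368311600457678)*w1*w2*w3^3*w4^3 + (65682960166726782134345373587239/162015556074552467400686517)*w1*w2*w3^2*w4^4 + (601446692460276354447898660034/23145079439221781057240931)*w1*w2*w3*w4^5 + 717444*w1*w3^7 + (4158890387039870713033698207/5831463703507629392099)*w1*w3^6*w4 + (134959415809182444463949509387/122460737773660217234079)*w1*w3^5*w4^2 + (942883381993328999458630310626/367382213320980651702237)*w1*w3^4*w4^3 + (4060935066364796157767667085997/2571675493246864561915659)*w1*w3^3*w4^4 + (39595762582502127208723913307/285741721471873840212851)*w1*w3^2*w4^5 + 324*w2^4*w3^4 + (910056866495803153022741455/1102146639962941955106711)*w2^4*w3^2*w4^2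 + (270039291831482842188530848/1102146639962941955106711)*w2^4*w3*w4^3 + 15*w2^4*w4^4 + (558253495991543237701996552/179419220459083574087139)*w2^3*w3^4*w4 + (3555086019630891817313662741142/162015556074552467400686517)*w2^3*w3^2*w4^3 + (384402723236951650951661437322/162015556074552467400686517)*w2^3*w3*w4^4 + (5273/49)*w2^3*w4^5 + (1403577/43)*w2^2*w3^6 + (163156596615168543976511681443/7715026479740593685746977)*w2^2*w3^5*w4 + (15637361832559857052691792418713/162015556074552467400686517)*w2^2*w3^3*w4^3 + (16440450106833218798196500809918/162015556074552467400686517)*w2^2*w3^2*w4^4 + (81793508461747611215337959624/23145079439221781057240931)*w2^2*w3*w4^5 + (1143/7)*w2^2*w4^6 + 257481*w2*w3^7 + (105554879061245534765389349170/367382213320980651702237)*w2*w3^6*w4 + (385283339838313495618264408861/1102146639962941955106711)*w2*w3^5*w4^2 + (5993569685567492614480236883033/7715026479740593685746977)*w2*w3^4*w4^3 + (11600114796297998023859527991309/23145079439221781057240931)*w2*w3^3*w4^4 + (1026899088740300171585808810278/23145079439221781057240931)*w2*w3^2*w4^5 + 621*w2*w3*w4^6 + 315*w2*w4^7 + 129843*w3^8 + (1182930118565732490999981995/5831463703507629392099)*w3^7*w4 + (4683069117985960463042473411/17494391110522888176297)*w3^6*w4^2 + (163133846968267823054270970326/367382213320980651702237)*w3^5*w4^3 + (116149959498488744444432986670/367382213320980651702237)*w3^4*w4^4 + (8183611213329089754279409792/122460737773660217234079)*w3^3*w4^5 + 105*w3*w4^7 + 140*w4^8)"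
      unfolding eU eV ea eb by algebra
    have lp: "0 < (1347012286147189699909717705/42004033056365454511289097)*w1^4*w4 + (6222490024881138787226852360/378036297507289090601601873)*w1^3*w2*w4 + (845387081179401687048068482/6000576150909350644469871)*w1^3*w3*w4 + (34042242036843948727032197/6000576150909350644469871)*w1^3*w4^2 + (1746469091745210105139373323/5861027868330063420179874)*w1^2*w2^2*w3 + (815003575961874595872401981/126012099169096363533867291)*w1^2*w2^2*w4 + (45063924467785147727885700529/36003456905456103866819226)*w1^2*w2*w3^2 + (45579200883808279181483119/54005185358184155800228839)*w1^2*w2*w4^2 + (1911730831997659806314695/857225164415621520638553)*w1^2*w4^3 + (145418746817462884283529790/157449519994705993586673)*w1*w2^2*w3^2 + (5231855279683458489910214/157449519994705993586673)*w1*w2^2*w3*w4 + (89426235786365598979948235/2204293279925883910213422)*w1*w2*w3^2*w4 + (47651546428323275497676837/7715026479740593685746977)*w1*w2*w4^3 + (3079207890543109849705256/857225164415621520638553)*w1*w3*w4^3 + (1210/49)*w1*w4^4 + (1458/43)*w2^2*w3^3 + (143784/1849)*w2^2*w3^2*w4 + (63366749277588130824942556/1102146639962941955106711)*w2^2*w3*w4^2 + 10*w2^2*w4^3 + (1733808228439458815120931280/7715026479740593685746977)*w2*w3^3*w4 + (754183545498404263535795581/7715026479740593685746977)*w2*w3^2*w4^2 + (66936170876460472338016517717/162015556074552467400686517)*w2*w3*w4^3 + (1651/49)*w2*w4^4 + 819*w3^5 + (26410911031285399441339919/857225164415621520638553)*w3^4*w4 + (3853315131405166000772004608/2571675493246864561915659)*w3^3*w4^2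 + (11153896408029218323291995937/6000576150909350644469871)*w3^2*w4^3 + (2020/7)*w3*w4^4 + 15*w4^5"
      by (intro add_pos_pos mult_pos_pos zero_less_power) (simp_all add: w1p w2p w3p w4p)
    have rp: "0 \<le> (1347012286147189699909717705/2000192050303116881489957)*w1^7*w4 + (74374210826071146797818820/59806406819694524695713)*w1^6*w2*w4 + 567*w1^6*w3^2 + (167947580896139802925652375290/14001344352121818170429699)*w1^6*w3*w4 + (194885171436426452384535707065/42004033056365454511289097)*w1^6*w4^2 + (1746469091745210105139373323/279096565158574448579994)*w1^5*w2^2*w3 + (44348102858506133810946486614/54005185358184155800228839)*w1^5*w2^2*w4 + (48304235589276197075899430869/1714450328831243041277106)*w1^5*w2*w3^2 + (234328455182382096880832956099/14001344352121818170429699)*w1^5*w2*w3*w4 + (1508111927006234542311717518516/378036297507289090601601873)*w1^5*w2*w4^2 + 5481*w1^5*w3^3 + (145134551142068659220387168799/2000192050303116881489957)*w1^5*w3^2*w4 + (103021362803351036498984731538/2000192050303116881489957)*w1^5*w3*w4^2 + (3492938183490420210278746646/418644847737861672869991)*w1^4*w2^3*w3 + (16002532936423633937695676132/54005185358184155800228839)*w1^4*w2^3*w4 + (5761455331366832795438318996125/42004033056365454511289097)*w1^4*w2^2*w3^2 + (38845575096993101231246950775987/756072595014578181203203746)*w1^4*w2^2*w3*w4 + (689943660128890437096513216344/378036297507289090601601873)*w1^4*w2^2*w4^2 + (707335879709882210438218463394/2000192050303116881489957)*w1^4*w2*w3^3 + (1469798580157002298350665805388/6000576150909350644469871)*w1^4*w2*w3^2*w4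 + (1917461088550898086656709171765/54005185358184155800228839)*w1^4*w2*w3*w4^2 + 10395*w1^4*w3^4 + (42685829714365949382353308561/285741721471873840212851)*w1^4*w3^3*w4 + (39728374983029127427356578487/285741721471873840212851)*w1^4*w3^2*w4^2 + (1746469091745210105139373323/837289695475723345739982)*w1^3*w2^4*w3 + (815003575961874595872401981/18001728452728051933409613)*w1^3*w2^4*w4 + (38412146789081966415064153267687/378036297507289090601601873)*w1^3*w2^3*w3^2 + (12127949125421780095619449600673/756072595014578181203203746)*w1^3*w2^3*w3*w4 + (45888804707591109604515415924/126012099169096363533867291)*w1^3*w2^3*w4^2 + (28990072639338190071931653682661/36003456905456103866819226)*w1^3*w2^2*w3^3 + (25904129439700855050946771160284/54005185358184155800228839)*w1^3*w2^2*w3^2*w4 + (851316419401981011261539750797/108010370716368311600457678)*w1^3*w2^2*w3*w4^2 + (45928007433516094220689361953/40820245924553405744693)*w1^3*w2*w3^4 + (6077010005191887152856191309111/5143350986493729123831318)*w1^3*w2*w3^3*w4 + (1753363321538877898634512228/857225164415621520638553)*w1^3*w4^5 + (14718667527890633121762079691735/756072595014578181203203746)*w1^2*w2^4*w3^2 + (15405313635508031560283499578/378036297507289090601601873)*w1^2*w2^4*w3*w4 + (1016246930627274442466409149/126012099169096363533867291)*w1^2*w2^4*w4^2 + (2737390718857538178131835581918/7715026479740593685746977)*w1^2*w2^3*w3^3 + (1039328266240032065767887695329/7715026479740593685746977)*w1^2*w2^3*w3^2*w4 + (3230588429334048401850006426740/2571675493246864561915659)*w1^2*w2^2*w3^4 +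 (9965530878683413063997580512585/7715026479740593685746977)*w1^2*w2^2*w3^3*w4 + (30690140236148674979219427074/3306439919888825865320133)*w1^2*w2^2*w3*w4^3 + (5232674817663207559852749848/7715026479740593685746977)*w1^2*w2^2*w4^4 + (39061633866546965840374552423/244921475547320434468158)*w1^2*w2*w3^5 + (597162526460651061101319445316/2571675493246864561915659)*w1^2*w2*w3^4*w4 + (2248391146472651315277307846175/36003456905456103866819226)*w1^2*w2*w3^2*w4^3 + (9415233971297892409333491978866/162015556074552467400686517)*w1^2*w2*w3*w4^4 + (28858056143782494310776670046/7715026479740593685746977)*w1^2*w2*w4^5 + 184086*w1^2*w3^6 + (5095242989177621791665444273/285741721471873840212851)*w1^2*w3^5*w4 + (19384408041473603282045224394/122460737773660217234079)*w1^2*w3^4*w4^2 + (8339413527709332693469578408581/18001728452728051933409613)*w1^2*w3^3*w4^3 + (523258718848216414179590904013/2000192050303116881489957)*w1^2*w3^2*w4^4 + (48344581066678363932456079/949308044757055947551)*w1^2*w3*w4^5 + (5850/7)*w1^2*w4^6 + (149056009552483907436618568/3661616744062930083411)*w1*w2^4*w3^3 + (1045369339909181334301371916/3661616744062930083411)*w1*w2^3*w3^4 + (207923282937497348890480284331/734764426641961303404474)*w1*w2^3*w3^3*w4 + (73732405253419598054560054610/23145079439221781057240931)*w1*w2^3*w3*w4^3 + (1647190744924764680028356417/7715026479740593685746977)*w1*w2^3*w4^4 + (6912906817811667294599699995/52483173331568664528891)*w1*w2^2*w3^5 + (3418010906893609351889880313691/15430052959481187371493954)*w1*w2^2*w3^4*w4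 + (36722901205160866428889504223/734764426641961303404474)*w1*w2^2*w3^3*w4^2 + (14411167597292637536273411908144/162015556074552467400686517)*w1*w2^2*w3^2*w4^3 + (4018854975034690686120215079226/162015556074552467400686517)*w1*w2^2*w3*w4^4 + (7989610408832404376421392495/7715026479740593685746977)*w1*w2^2*w4^5 + 137151*w1*w2*w3^6 + (362907956244254723728186077053/5143350986493729123831318)*w1*w2*w3^5*w4 + (64920823323742887314377515353/367382213320980651702237)*w1*w2*w3^4*w4^2 + (56086682840497136246745286389845/108010370716368311600457678)*w1*w2*w3^3*w4^3 + (65682960166726782134345373587239/162015556074552467400686517)*w1*w2*w3^2*w4^4 + (601446692460276354447898660034/23145079439221781057240931)*w1*w2*w3*w4^5 + 717444*w1*w3^7 + (4158890387039870713033698207/5831463703507629392099)*w1*w3^6*w4 + (134959415809182444463949509387/122460737773660217234079)*w1*w3^5*w4^2 + (942883381993328999458630310626/367382213320980651702237)*w1*w3^4*w4^3 + (4060935066364796157767667085997/2571675493246864561915659)*w1*w3^3*w4^4 + (39595762582502127208723913307/285741721471873840212851)*w1*w3^2*w4^5 + 324*w2^4*w3^4 + (910056866495803153022741455/1102146639962941955106711)*w2^4*w3^2*w4^2 + (270039291831482842188530848/1102146639962941955106711)*w2^4*w3*w4^3 + 15*w2^4*w4^4 + (558253495991543237701996552/179419220459083574087139)*w2^3*w3^4*w4 + (3555086019630891817313662741142/162015556074552467400686517)*w2^3*w3^2*w4^3 + (384402723236951650951661437322/162015556074552467400686517)*w2^3*w3*w4^4 + (5273/49)*w2^3*w4^5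 + (1403577/43)*w2^2*w3^6 + (163156596615168543976511681443/7715026479740593685746977)*w2^2*w3^5*w4 + (15637361832559857052691792418713/162015556074552467400686517)*w2^2*w3^3*w4^3 + (16440450106833218798196500809918/162015556074552467400686517)*w2^2*w3^2*w4^4 + (81793508461747611215337959624/23145079439221781057240931)*w2^2*w3*w4^5 + (1143/7)*w2^2*w4^6 + 257481*w2*w3^7 + (105554879061245534765389349170/367382213320980651702237)*w2*w3^6*w4 + (385283339838313495618264408861/1102146639962941955106711)*w2*w3^5*w4^2 + (5993569685567492614480236883033/7715026479740593685746977)*w2*w3^4*w4^3 + (11600114796297998023859527991309/23145079439221781057240931)*w2*w3^3*w4^4 + (1026899088740300171585808810278/23145079439221781057240931)*w2*w3^2*w4^5 + 621*w2*w3*w4^6 + 315*w2*w4^7 + 129843*w3^8 + (1182930118565732490999981995/5831463703507629392099)*w3^7*w4 + (4683069117985960463042473411/17494391110522888176297)*w3^6*w4^2 + (163133846968267823054270970326/367382213320980651702237)*w3^5*w4^3 + (116149959498488744444432986670/367382213320980651702237)*w3^4*w4^4 + (8183611213329089754279409792/122460737773660217234079)*w3^3*w4^5 + 105*w3*w4^7 + 140*w4^8"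
      by (intro add_nonneg_nonneg mult_nonneg_nonneg zero_le_power) (simp_all add: w1p w2p w3p w4p less_imp_le)
    have "0 < (0 - (- (21*U^2*V*a*b^2) - 35*U^2*V*b^3 + 35*U^2*a*b^3 + 35*U^2*b^4 + 70*U*V*a*b^3 + 70*U*V*b^4 - 70*U*a*b^4 - 42*U*b^5 - 35*V*a*b^4 - 21*V*b^5 + 21*a*b^5 + 7*b^6)) * (w1+w2+w3+w4)^2" unfolding key using lp rp Cpos by (simp add: add_pos_nonneg)
    moreover have "0 < (w1+w2+w3+w4)^2" using w1p w2p w3p w4p by simp
    ultimately have "0 < (0 - (- (21*U^2*V*a*b^2) - 35*U^2*V*b^3 + 35*U^2*a*b^3 + 35*U^2*b^4 + 70*U*V*a*b^3 + 70*U*V*b^4 - 70*U*a*b^4 - 42*U*b^5 - 35*V*a*b^4 - 21*V*b^5 + 21*a*b^5 + 7*b^6))" by (simp add: zero_less_mult_iff)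
    then show False using c5 e5 by simp
  next
    case 3
    have "0 < U * (3*(a*b) - U*(1*b+7*a))" using Cpos 3 by (simp add: algebra_simps)
    then have h1: "U*(1*b+7*a) < 3*(a*b)" using pU by (simp add: zero_less_mult_iff)
    have h2: "1*a + 7*b = 3*U" using rel 3 by simp
    have h3: "(1*a+7*b)*(1*b+7*a) = 7*(a-b)^2 + 64*(a*b)" by algebra
    have h4: "(1*a+7*b)*(1*b+7*a) = 3*(U*(1*b+7*a))" unfolding h2 by (simp add: algebra_simps)
    have "0 \<le> (a-b)^2" by simp
    moreover have "0 < a*b" using pa pb by simp
    ultimately show False using h1 h3 h4 by linarith
  qed
qed

lemma core_2:
  fixes U V a b :: real
  assumes pU: "0 < U" and pV: "0 < V" and pa: "0 < a" and pb: "0 < b"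
    and c10: "coeff ([:-U,1:]^2 * [:-V,1:] * [:a,1:]^2 * [:b,1:]^6 :: real poly) 10 = 0"
    and c1: "0 < coeff ([:-U,1:]^2 * [:-V,1:] * [:a,1:]^2 * [:b,1:]^6 :: real poly) 1"
    and c7: "coeff ([:-U,1:]^2 * [:-V,1:] * [:a,1:]^2 * [:b,1:]^6 :: real poly) 7 \<le> 0"
    and c5: "0 \<le> coeff ([:-U,1:]^2 * [:-V,1:] * [:a,1:]^2 * [:b,1:]^6 :: real poly) 5"
  shows False
proof -
  have e10: "coeff ([:-U,1:]^2 * [:-V,1:] * [:a,1:]^2 * [:b,1:]^6 :: real poly) 10 = 2*a + 6*b - 2*U - V"
    by (simp add: eval_nat_numeral; algebra)
  have rel: "2*a + 6*b = 2*U + V" using c10 e10 by simp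
  have e1: "coeff ([:-U,1:]^2 * [:-V,1:] * [:a,1:]^2 * [:b,1:]^6 :: real poly) 1 = U * a^1 * b^5 * ((2*V+U)*a*b - U*V*(2*b+6*a))"
    by (simp add: eval_nat_numeral; algebra)
  have "0 < U * a^1 * b^5" using pU pa pb by simp
  then have Cpos: "0 < ((2*V+U)*a*b - U*V*(2*b+6*a))" using c1 e1 by (metis zero_less_mult_pos)
  have e7: "coeff ([:-U,1:]^2 * [:-V,1:] * [:a,1:]^2 * [:b,1:]^6 :: real poly) 7 = - (2*U^2*V*a) - 6*U^2*V*b + U^2*a^2 + 12*U^2*a*b + 15*U^2*b^2 + 2*U*V*a^2 + 24*U*V*a*b + 30*U*V*b^2 - 12*U*a^2*b - 60*U*a*b^2 - 40*U*b^3 - 6*V*a^2*b - 30*V*a*b^2 - 20*V*b^3 + 15*a^2*b^2 + 40*a*b^3 + 15*b^4"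
    by (simp add: eval_nat_numeral; algebra)
  have e5: "coeff ([:-U,1:]^2 * [:-V,1:] * [:a,1:]^2 * [:b,1:]^6 :: real poly) 5 = - (6*U^2*V*a^2*b) - 30*U^2*V*a*b^2 - 20*U^2*V*b^3 + 15*U^2*a^2*b^2 + 40*U^2*a*b^3 + 15*U^2*b^4 + 30*U*V*a^2*b^2 + 80*U*V*a*b^3 + 30*U*V*b^4 - 40*U*a^2*b^3 - 60*U*a*b^4 - 12*U*b^5 - 20*V*a^2*b^3 - 30*V*a*b^4 - 6*V*b^5 + 15*a^2*b^4 + 12*a*b^5 + b^6"
    by (simp add: eval_nat_numeral; algebra)
  consider "V < U" | "U < V" | "U = V" by linarith
  then show False
  proof cases
    case 1
    define S where "S = 3*V + 2*(U-V)"
    have Sp: "0 < S" using 1 pU pV unfolding S_def by simp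
    define iS where "iS = 1/S"
    have iSp: "0 < iS" using Sp unfolding iS_def by simp
    have hS: "S*iS = 1" using Sp unfolding iS_def by simp
    define w1 where "w1 = a*V*iS"
    define w2 where "w2 = a*(U-V)*iS"
    define w3 where "w3 = b*V*iS"
    define w4 where "w4 = b*(U-V)*iS"
    have w1p: "0 < w1" unfolding w1_def using iSp pa pb pU pV 1 by simp
    have w2p: "0 < w2" unfolding w2_def using iSp pa pb pU pV 1 by simp
    have w3p: "0 < w3" unfolding w3_def using iSp pa pb pU pV 1 by simp
    have w4p: "0 < w4" unfolding w4_def using iSp pa pb pU pV 1 by simp
    have ea: "a = 3*w1 + 2*w2" unfolding w1_def w2_def using hS rel unfolding S_def by algebra
    have eb: "b = 3*w3 + 2*w4" unfolding w3_def w4_def using hS rel unfolding S_def by algebra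
    have eV: "V = 2*w1 + 6*w3" unfolding w1_def w2_def w3_def w4_def using hS rel unfolding S_def by algebra
    have eU: "U = 2*w1 + 6*w3 + (2*w2 + 6*w4)" unfolding w1_def w2_def w3_def w4_def using hS rel unfolding S_def by algebra
    have key: "(- (2*U^2*V*a) - 6*U^2*V*b + U^2*a^2 + 12*U^2*a*b + 15*U^2*b^2 + 2*U*V*a^2 + 24*U*V*a*b + 30*U*V*b^2 - 12*U*a^2*b - 60*U*a*b^2 - 40*U*b^3 - 6*V*a^2*b - 30*V*a*b^2 - 20*V*b^3 + 15*a^2*b^2 + 40*a*b^3 + 15*b^4) = (0) * ((2*V+U)*a*b - U*V*(2*b+6*a)) + (60*w1^4 + 160*w1^3*w2 + 396*w1^3*w3 + 264*w1^3*w4 + 164*w1^2*w2^2 + 792*w1^2*w2*w3 + 552*w1^2*w2*w4 + 1215*w1^2*w3^2 + 1620*w1^2*w3*w4 + 576*w1^2*w4^2 + 80*w1*w2^3 + 480*w1*w2^2*w3 + 384*w1*w2^2*w4 + 1620*w1*w2*w3^2 + 1872*w1*w2*w3*w4 + 672*w1*w2*w4^2 + 1620*w1*w3^3 + 3240*w1*w3^2*w4 + 1728*w1*w3*w4^2 + 288*w1*w4^3 + 16*w2^4 + 96*w2^3*w3 + 96*w2^3*w4 + 504*w2^2*w3^2 + 576*w2^2*w3*w4 + 240*w2^2*w4^2 + 1080*w2*w3^3 + 1944*w2*w3^2*w4 + 1152*w2*w3*w4^2 + 288*w2*w4^3 + 2187*w3^4 + 5832*w3^3*w4 + 5508*w3^2*w4^2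 + 2448*w3*w4^3 + 480*w4^4)"
      unfolding eU eV ea eb by algebra
    have rp: "0 < 60*w1^4 + 160*w1^3*w2 + 396*w1^3*w3 + 264*w1^3*w4 + 164*w1^2*w2^2 + 792*w1^2*w2*w3 + 552*w1^2*w2*w4 + 1215*w1^2*w3^2 + 1620*w1^2*w3*w4 + 576*w1^2*w4^2 + 80*w1*w2^3 + 480*w1*w2^2*w3 + 384*w1*w2^2*w4 + 1620*w1*w2*w3^2 + 1872*w1*w2*w3*w4 + 672*w1*w2*w4^2 + 1620*w1*w3^3 + 3240*w1*w3^2*w4 + 1728*w1*w3*w4^2 + 288*w1*w4^3 + 16*w2^4 + 96*w2^3*w3 + 96*w2^3*w4 + 504*w2^2*w3^2 + 576*w2^2*w3*w4 + 240*w2^2*w4^2 + 1080*w2*w3^3 + 1944*w2*w3^2*w4 + 1152*w2*w3*w4^2 + 288*w2*w4^3 + 2187*w3^4 + 5832*w3^3*w4 + 5508*w3^2*w4^2 + 2448*w3*w4^3 + 480*w4^4"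
      by (intro add_pos_pos mult_pos_pos zero_less_power) (simp_all add: w1p w2p w3p w4p)
    have "0 < (- (2*U^2*V*a) - 6*U^2*V*b + U^2*a^2 + 12*U^2*a*b + 15*U^2*b^2 + 2*U*V*a^2 + 24*U*V*a*b + 30*U*V*b^2 - 12*U*a^2*b - 60*U*a*b^2 - 40*U*b^3 - 6*V*a^2*b - 30*V*a*b^2 - 20*V*b^3 + 15*a^2*b^2 + 40*a*b^3 + 15*b^4)" unfolding key using rp by simp
    then have "0 < (- (2*U^2*V*a) - 6*U^2*V*b + U^2*a^2 + 12*U^2*a*b + 15*U^2*b^2 + 2*U*V*a^2 + 24*U*V*a*b + 30*U*V*b^2 - 12*U*a^2*b - 60*U*a*b^2 - 40*U*b^3 - 6*V*a^2*b - 30*V*a*b^2 - 20*V*b^3 + 15*a^2*b^2 + 40*a*b^3 + 15*b^4)" by simp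
    then show False using c7 e7 by simp
  next
    case 2
    define S where "S = 3*U + (V-U)"
    have Sp: "0 < S" using 2 pU pV unfolding S_def by simp
    define iS where "iS = 1/S"
    have iSp: "0 < iS" using Sp unfolding iS_def by simp
    have hS: "S*iS = 1" using Sp unfolding iS_def by simp
    define w1 where "w1 = a*U*iS"
    define w2 where "w2 = a*(V-U)*iS"
    define w3 where "w3 = b*U*iS"
    define w4 where "w4 = b*(V-U)*iS"
    have w1p: "0 < w1" unfolding w1_def using iSp pa pb pU pV 2 by simp
    have w2p: "0 < w2" unfolding w2_def using iSp pa pb pU pV 2 by simp
    have w3p: "0 < w3" unfolding w3_def using iSp pa pb pU pV 2 by simp
    have w4p: "0 < w4" unfolding w4_def using iSp pa pb pU pV 2 by simp
    have ea: "a = 3*w1 + w2" unfolding w1_def w2_def using hS rel unfolding S_def by algebra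
    have eb: "b = 3*w3 + w4" unfolding w3_def w4_def using hS rel unfolding S_def by algebra
    have eV: "V = 2*w1 + 6*w3 + (2*w2 + 6*w4)" unfolding w1_def w2_def w3_def w4_def using hS rel unfolding S_def by algebra
    have eU: "U = 2*w1 + 6*w3" unfolding w1_def w2_def w3_def w4_def using hS rel unfolding S_def by algebra
    have key: "(0 - (- (6*U^2*V*a^2*b) - 30*U^2*V*a*b^2 - 20*U^2*V*b^3 + 15*U^2*a^2*b^2 + 40*U^2*a*b^3 + 15*U^2*b^4 + 30*U*V*a^2*b^2 + 80*U*V*a*b^3 + 30*U*V*b^4 - 40*U*a^2*b^3 - 60*U*a*b^4 - 12*U*b^5 - 20*V*a^2*b^3 - 30*V*a*b^4 - 6*V*b^5 + 15*a^2*b^4 + 12*a*b^5 + b^6)) = ((1921525/40768)*w1^3 + (19789541/1732640)*w1^2*w2 + (2415936543/3465280)*w1^2*w3 + (749535/346528)*w1^2*w4 + (543/280)*w1*w2*w4 + (35073/280)*w1*w3^2 + (31401/24752)*w1*w4^2 + (3951/112)*w2*w3^2 + (1473/112)*w2*w3*w4 + (2981/560)*w2*w4^2 + (243/4)*w3^3 + (43578/455)*w3*w4^2 + (22624361/1559376)*w4^3) * ((2*V+U)*a*b - U*V*(2*b+6*a)) + ((17293725/5096)*w1^6 + (165440517/30940)*w1^5*w2 + (122048471613/1732640)*w1^5*w3 + (3568256891/346528)*w1^5*w4 + (964937859/433160)*w1^4*w2^2 + (154612240071/1732640)*w1^4*w2*w3 + (10989067469/1732640)*w1^4*w2*w4 +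 (279426745053/866320)*w1^4*w3^2 + (11690525319/66640)*w1^4*w3*w4 + (4545927/12376)*w1^4*w4^2 + (59368623/216580)*w1^3*w2^3 + (10542044229/433160)*w1^3*w2^2*w3 + (67677557/61880)*w1^3*w2^2*w4 + (231837919587/866320)*w1^3*w2*w3^2 + (7664451663/123760)*w1^3*w2*w3*w4 + (874233431433/1732640)*w1^3*w3^3 + (114766615629/247520)*w1^3*w3^2*w4 + (71843631/86632)*w1^2*w2^3*w3 + (21162643/433160)*w1^2*w2^3*w4 + (4456047249/86632)*w1^2*w2^2*w3^2 + (56283410601/247520)*w1^2*w2*w3^3 + (50048924949/346528)*w1^2*w2*w3^2*w4 + (87848359/99960)*w1^2*w2*w4^3 + (105675627051/433160)*w1^2*w3^4 + (1760633523/6370)*w1^2*w3^3*w4 + (1012544739/15470)*w1^2*w3^2*w4^2 + (2694276551/162435)*w1^2*w3*w4^3 + (1464681245/779688)*w1^2*w4^4 + (8829/14)*w1*w2^3*w3^2 + (960903/56)*w1*w2^2*w3^3 + (568305/221)*w1*w2^2*w3*w4^2 + (85739621/259896)*w1*w2^2*w4^3 + (18183447/280)*w1*w2*w3^4 + (3736773/140)*w1*w2*w3^3*w4 + (1099889253/61880)*w1*w2*w3^2*w4^2 + (2341553273/259896)*w1*w2*w3*w4^3 + (2847541687/3898440)*w1*w2*w4^4 + (3552417/70)*w1*w3^5 + (3401271/70)*w1*w3^4*w4 + (314080659/15470)*w1*w3^3*w4^2 + (2642642993/61880)*w1*w3^2*w4^3 + (6074084069/1299480)*w1*w3*w4^4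 + (766279/129948)*w1*w4^5 + (35073/28)*w2^3*w3^3 + (3735/14)*w2^3*w3*w4^2 + (2619/140)*w2^3*w4^3 + (453195/56)*w2^2*w3^4 + (301671/65)*w2^2*w3^2*w4^2 + (1636966741/1299480)*w2^2*w3*w4^3 + (41993053/974610)*w2^2*w4^4 + (118827/7)*w2*w3^5 + (5739079669/433160)*w2*w3^2*w4^3 + (361921019/259896)*w2*w3*w4^4 + (766279/129948)*w2*w4^5 + 24057*w3^6 + 39366*w3^5*w4 + (8638893/455)*w3^4*w4^2 + (1630554447/108290)*w3^3*w4^3 + (299927339/54145)*w3^2*w4^4 + (12878261/21658)*w3*w4^5 + 35*w4^6)"
      unfolding eU eV ea eb by algebra
    have lp: "0 < (1921525/40768)*w1^3 + (19789541/1732640)*w1^2*w2 + (2415936543/3465280)*w1^2*w3 + (749535/346528)*w1^2*w4 + (543/280)*w1*w2*w4 + (35073/280)*w1*w3^2 + (31401/24752)*w1*w4^2 + (3951/112)*w2*w3^2 + (1473/112)*w2*w3*w4 + (2981/560)*w2*w4^2 + (243/4)*w3^3 + (43578/455)*w3*w4^2 + (22624361/1559376)*w4^3"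
      by (intro add_pos_pos mult_pos_pos zero_less_power) (simp_all add: w1p w2p w3p w4p)
    have rp: "0 \<le> (17293725/5096)*w1^6 + (165440517/30940)*w1^5*w2 + (122048471613/1732640)*w1^5*w3 + (3568256891/346528)*w1^5*w4 + (964937859/433160)*w1^4*w2^2 + (154612240071/1732640)*w1^4*w2*w3 + (10989067469/1732640)*w1^4*w2*w4 + (279426745053/866320)*w1^4*w3^2 + (11690525319/66640)*w1^4*w3*w4 + (4545927/12376)*w1^4*w4^2 + (59368623/216580)*w1^3*w2^3 + (10542044229/433160)*w1^3*w2^2*w3 + (67677557/61880)*w1^3*w2^2*w4 + (231837919587/866320)*w1^3*w2*w3^2 + (7664451663/123760)*w1^3*w2*w3*w4 + (874233431433/1732640)*w1^3*w3^3 + (114766615629/247520)*w1^3*w3^2*w4 + (71843631/86632)*w1^2*w2^3*w3 + (21162643/433160)*w1^2*w2^3*w4 + (4456047249/86632)*w1^2*w2^2*w3^2 + (56283410601/247520)*w1^2*w2*w3^3 + (50048924949/346528)*w1^2*w2*w3^2*w4 + (87848359/99960)*w1^2*w2*w4^3 + (105675627051/433160)*w1^2*w3^4 + (1760633523/6370)*w1^2*w3^3*w4 + (1012544739/15470)*w1^2*w3^2*w4^2 + (2694276551/162435)*w1^2*w3*w4^3 + (1464681245/779688)*w1^2*w4^4 + (8829/14)*w1*w2^3*w3^2 + (960903/56)*w1*w2^2*w3^3 + (568305/221)*w1*w2^2*w3*w4^2 + (85739621/259896)*w1*w2^2*w4^3 + (18183447/280)*w1*w2*w3^4 + (3736773/140)*w1*w2*w3^3*w4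 + (1099889253/61880)*w1*w2*w3^2*w4^2 + (2341553273/259896)*w1*w2*w3*w4^3 + (2847541687/3898440)*w1*w2*w4^4 + (3552417/70)*w1*w3^5 + (3401271/70)*w1*w3^4*w4 + (314080659/15470)*w1*w3^3*w4^2 + (2642642993/61880)*w1*w3^2*w4^3 + (6074084069/1299480)*w1*w3*w4^4 + (766279/129948)*w1*w4^5 + (35073/28)*w2^3*w3^3 + (3735/14)*w2^3*w3*w4^2 + (2619/140)*w2^3*w4^3 + (453195/56)*w2^2*w3^4 + (301671/65)*w2^2*w3^2*w4^2 + (1636966741/1299480)*w2^2*w3*w4^3 + (41993053/974610)*w2^2*w4^4 + (118827/7)*w2*w3^5 + (5739079669/433160)*w2*w3^2*w4^3 + (361921019/259896)*w2*w3*w4^4 + (766279/129948)*w2*w4^5 + 24057*w3^6 + 39366*w3^5*w4 + (8638893/455)*w3^4*w4^2 + (1630554447/108290)*w3^3*w4^3 + (299927339/54145)*w3^2*w4^4 + (12878261/21658)*w3*w4^5 + 35*w4^6"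
      by (intro add_nonneg_nonneg mult_nonneg_nonneg zero_le_power) (simp_all add: w1p w2p w3p w4p less_imp_le)
    have "0 < (0 - (- (6*U^2*V*a^2*b) - 30*U^2*V*a*b^2 - 20*U^2*V*b^3 + 15*U^2*a^2*b^2 + 40*U^2*a*b^3 + 15*U^2*b^4 + 30*U*V*a^2*b^2 + 80*U*V*a*b^3 + 30*U*V*b^4 - 40*U*a^2*b^3 - 60*U*a*b^4 - 12*U*b^5 - 20*V*a^2*b^3 - 30*V*a*b^4 - 6*V*b^5 + 15*a^2*b^4 + 12*a*b^5 + b^6))" unfolding key using lp rp Cpos by (simp add: add_pos_nonneg)
    then have "0 < (0 - (- (6*U^2*V*a^2*b) - 30*U^2*V*a*b^2 - 20*U^2*V*b^3 + 15*U^2*a^2*b^2 + 40*U^2*a*b^3 + 15*U^2*b^4 + 30*U*V*a^2*b^2 + 80*U*V*a*b^3 + 30*U*V*b^4 - 40*U*a^2*b^3 - 60*U*a*b^4 - 12*U*b^5 - 20*V*a^2*b^3 - 30*V*a*b^4 - 6*V*b^5 + 15*a^2*b^4 + 12*a*b^5 + b^6))" by simp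
    then show False using c5 e5 by simp
  next
    case 3
    have "0 < U * (3*(a*b) - U*(2*b+6*a))" using Cpos 3 by (simp add: algebra_simps)
    then have h1: "U*(2*b+6*a) < 3*(a*b)" using pU by (simp add: zero_less_mult_iff)
    have h2: "2*a + 6*b = 3*U" using rel 3 by simp
    have h3: "(2*a+6*b)*(2*b+6*a) = 12*(a-b)^2 + 64*(a*b)" by algebra
    have h4: "(2*a+6*b)*(2*b+6*a) = 3*(U*(2*b+6*a))" unfolding h2 by (simp add: algebra_simps)
    have "0 \<le> (a-b)^2" by simp
    moreover have "0 < a*b" using pa pb by simp
    ultimately show False using h1 h3 h4 by linarith
  qed
qed

lemma core_3:
  fixes U V a b :: real
  assumes pU: "0 < U" and pV: "0 < V" and pa: "0 < a" and pb: "0 < b"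
    and c10: "coeff ([:-U,1:]^2 * [:-V,1:] * [:a,1:]^3 * [:b,1:]^5 :: real poly) 10 = 0"
    and c1: "0 < coeff ([:-U,1:]^2 * [:-V,1:] * [:a,1:]^3 * [:b,1:]^5 :: real poly) 1"
    and c7: "coeff ([:-U,1:]^2 * [:-V,1:] * [:a,1:]^3 * [:b,1:]^5 :: real poly) 7 \<le> 0"
    and c5: "0 \<le> coeff ([:-U,1:]^2 * [:-V,1:] * [:a,1:]^3 * [:b,1:]^5 :: real poly) 5"
  shows False
proof -
  have e10: "coeff ([:-U,1:]^2 * [:-V,1:] * [:a,1:]^3 * [:b,1:]^5 :: real poly) 10 = 3*a + 5*b - 2*U - V"
    by (simp add: eval_nat_numeral; algebra)
  have rel: "3*a + 5*b = 2*U + V" using c10 e10 by simp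
  have e1: "coeff ([:-U,1:]^2 * [:-V,1:] * [:a,1:]^3 * [:b,1:]^5 :: real poly) 1 = U * a^2 * b^4 * ((2*V+U)*a*b - U*V*(3*b+5*a))"
    by (simp add: eval_nat_numeral; algebra)
  have "0 < U * a^2 * b^4" using pU pa pb by simp
  then have Cpos: "0 < ((2*V+U)*a*b - U*V*(3*b+5*a))" using c1 e1 by (metis zero_less_mult_pos)
  have e7: "coeff ([:-U,1:]^2 * [:-V,1:] * [:a,1:]^3 * [:b,1:]^5 :: real poly) 7 = - (3*U^2*V*a) - 5*U^2*V*b + 3*U^2*a^2 + 15*U^2*a*b + 10*U^2*b^2 + 6*U*V*a^2 + 30*U*V*a*b + 20*U*V*b^2 - 2*U*a^3 - 30*U*a^2*b - 60*U*a*b^2 - 20*U*b^3 - V*a^3 - 15*V*a^2*b - 30*V*a*b^2 - 10*V*b^3 + 5*a^3*b + 30*a^2*b^2 + 30*a*b^3 + 5*b^4"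
    by (simp add: eval_nat_numeral; algebra)
  have e5: "coeff ([:-U,1:]^2 * [:-V,1:] * [:a,1:]^3 * [:b,1:]^5 :: real poly) 5 = - (U^2*V*a^3) - 15*U^2*V*a^2*b - 30*U^2*V*a*b^2 - 10*U^2*V*b^3 + 5*U^2*a^3*b + 30*U^2*a^2*b^2 + 30*U^2*a*b^3 + 5*U^2*b^4 + 10*U*V*a^3*b + 60*U*V*a^2*b^2 + 60*U*V*a*b^3 + 10*U*V*b^4 - 20*U*a^3*b^2 - 60*U*a^2*b^3 - 30*U*a*b^4 - 2*U*b^5 - 10*V*a^3*b^2 - 30*V*a^2*b^3 - 15*V*a*b^4 - V*b^5 + 10*a^3*b^3 + 15*a^2*b^4 + 3*a*b^5"
    by (simp add: eval_nat_numeral; algebra)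
  consider "V < U" | "U < V" | "U = V" by linarith
  then show False
  proof cases
    case 1
    define S where "S = 3*V + 2*(U-V)"
    have Sp: "0 < S" using 1 pU pV unfolding S_def by simp
    define iS where "iS = 1/S"
    have iSp: "0 < iS" using Sp unfolding iS_def by simp
    have hS: "S*iS = 1" using Sp unfolding iS_def by simp
    define w1 where "w1 = a*V*iS"
    define w2 where "w2 = a*(U-V)*iS"
    define w3 where "w3 = b*V*iS"
    define w4 where "w4 = b*(U-V)*iS"
    have w1p: "0 < w1" unfolding w1_def using iSp pa pb pU pV 1 by simp
    have w2p: "0 < w2" unfolding w2_def using iSp pa pb pU pV 1 by simp
    have w3p: "0 < w3" unfolding w3_def using iSp pa pb pU pV 1 by simp
    have w4p: "0 < w4" unfolding w4_def using iSp pa pb pU pV 1 by simp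
    have ea: "a = 3*w1 + 2*w2" unfolding w1_def w2_def using hS rel unfolding S_def by algebra
    have eb: "b = 3*w3 + 2*w4" unfolding w3_def w4_def using hS rel unfolding S_def by algebra
    have eV: "V = 3*w1 + 5*w3" unfolding w1_def w2_def w3_def w4_def using hS rel unfolding S_def by algebra
    have eU: "U = 3*w1 + 5*w3 + (3*w2 + 5*w4)" unfolding w1_def w2_def w3_def w4_def using hS rel unfolding S_def by algebra
    have key: "(- (3*U^2*V*a) - 5*U^2*V*b + 3*U^2*a^2 + 15*U^2*a*b + 10*U^2*b^2 + 6*U*V*a^2 + 30*U*V*a*b + 20*U*V*b^2 - 2*U*a^3 - 30*U*a^2*b - 60*U*a*b^2 - 20*U*b^3 - V*a^3 - 15*V*a^2*b - 30*V*a*b^2 - 10*V*b^3 + 5*a^3*b + 30*a^2*b^2 + 30*a*b^3 + 5*b^4) = (0) * ((2*V+U)*a*b - U*V*(3*b+5*a)) + (243*w1^4 + 648*w1^3*w2 + 810*w1^3*w3 + 540*w1^3*w4 + 648*w1^2*w2^2 + 1620*w1^2*w2*w3 + 1080*w1^2*w2*w4 + 1620*w1^2*w3^2 + 2160*w1^2*w3*w4 + 720*w1^2*w4^2 + 306*w1*w2^3 + 945*w1*w2^2*w3 + 720*w1*w2^2*w4 + 2160*w1*w2*w3^2 + 2430*w1*w2*w3*w4 + 810*w1*w2*w4^2 + 1575*w1*w3^3 + 3150*w1*w3^2*w4 + 1725*w1*w3*w4^2 + 300*w1*w4^3 + 60*w2^4 + 180*w2^3*w3 + 180*w2^3*w4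 + 675*w2^2*w3^2 + 750*w2^2*w3*w4 + 300*w2^2*w4^2 + 1050*w2*w3^3 + 1950*w2*w3^2*w4 + 1200*w2*w3*w4^2 + 300*w2*w4^3 + 1230*w3^4 + 3280*w3^3*w4 + 3155*w3^2*w4^2 + 1430*w3*w4^3 + 280*w4^4)"
      unfolding eU eV ea eb by algebra
    have rp: "0 < 243*w1^4 + 648*w1^3*w2 + 810*w1^3*w3 + 540*w1^3*w4 + 648*w1^2*w2^2 + 1620*w1^2*w2*w3 + 1080*w1^2*w2*w4 + 1620*w1^2*w3^2 + 2160*w1^2*w3*w4 + 720*w1^2*w4^2 + 306*w1*w2^3 + 945*w1*w2^2*w3 + 720*w1*w2^2*w4 + 2160*w1*w2*w3^2 + 2430*w1*w2*w3*w4 + 810*w1*w2*w4^2 + 1575*w1*w3^3 + 3150*w1*w3^2*w4 + 1725*w1*w3*w4^2 + 300*w1*w4^3 + 60*w2^4 + 180*w2^3*w3 + 180*w2^3*w4 + 675*w2^2*w3^2 + 750*w2^2*w3*w4 + 300*w2^2*w4^2 + 1050*w2*w3^3 + 1950*w2*w3^2*w4 + 1200*w2*w3*w4^2 + 300*w2*w4^3 + 1230*w3^4 + 3280*w3^3*w4 + 3155*w3^2*w4^2 + 1430*w3*w4^3 + 280*w4^4"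
      by (intro add_pos_pos mult_pos_pos zero_less_power) (simp_all add: w1p w2p w3p w4p)
    have "0 < (- (3*U^2*V*a) - 5*U^2*V*b + 3*U^2*a^2 + 15*U^2*a*b + 10*U^2*b^2 + 6*U*V*a^2 + 30*U*V*a*b + 20*U*V*b^2 - 2*U*a^3 - 30*U*a^2*b - 60*U*a*b^2 - 20*U*b^3 - V*a^3 - 15*V*a^2*b - 30*V*a*b^2 - 10*V*b^3 + 5*a^3*b + 30*a^2*b^2 + 30*a*b^3 + 5*b^4)" unfolding key using rp by simp
    then have "0 < (- (3*U^2*V*a) - 5*U^2*V*b + 3*U^2*a^2 + 15*U^2*a*b + 10*U^2*b^2 + 6*U*V*a^2 + 30*U*V*a*b + 20*U*V*b^2 - 2*U*a^3 - 30*U*a^2*b - 60*U*a*b^2 - 20*U*b^3 - V*a^3 - 15*V*a^2*b - 30*V*a*b^2 - 10*V*b^3 + 5*a^3*b + 30*a^2*b^2 + 30*a*b^3 + 5*b^4)" by simp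
    then show False using c7 e7 by simp
  next
    case 2
    define S where "S = 3*U + (V-U)"
    have Sp: "0 < S" using 2 pU pV unfolding S_def by simp
    define iS where "iS = 1/S"
    have iSp: "0 < iS" using Sp unfolding iS_def by simp
    have hS: "S*iS = 1" using Sp unfolding iS_def by simp
    define w1 where "w1 = a*U*iS"
    define w2 where "w2 = a*(V-U)*iS"
    define w3 where "w3 = b*U*iS"
    define w4 where "w4 = b*(V-U)*iS"
    have w1p: "0 < w1" unfolding w1_def using iSp pa pb pU pV 2 by simp
    have w2p: "0 < w2" unfolding w2_def using iSp pa pb pU pV 2 by simp
    have w3p: "0 < w3" unfolding w3_def using iSp pa pb pU pV 2 by simp
    have w4p: "0 < w4" unfolding w4_def using iSp pa pb pU pV 2 by simp
    have ea: "a = 3*w1 + w2" unfolding w1_def w2_def using hS rel unfolding S_def by algebra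
    have eb: "b = 3*w3 + w4" unfolding w3_def w4_def using hS rel unfolding S_def by algebra
    have eV: "V = 3*w1 + 5*w3 + (3*w2 + 5*w4)" unfolding w1_def w2_def w3_def w4_def using hS rel unfolding S_def by algebra
    have eU: "U = 3*w1 + 5*w3" unfolding w1_def w2_def w3_def w4_def using hS rel unfolding S_def by algebra
    have key: "(0 - (- (U^2*V*a^3) - 15*U^2*V*a^2*b - 30*U^2*V*a*b^2 - 10*U^2*V*b^3 + 5*U^2*a^3*b + 30*U^2*a^2*b^2 + 30*U^2*a*b^3 + 5*U^2*b^4 + 10*U*V*a^3*b + 60*U*V*a^2*b^2 + 60*U*V*a*b^3 + 10*U*V*b^4 - 20*U*a^3*b^2 - 60*U*a^2*b^3 - 30*U*a*b^4 - 2*U*b^5 - 10*V*a^3*b^2 - 30*V*a^2*b^3 - 15*V*a*b^4 - V*b^5 + 10*a^3*b^3 + 15*a^2*b^4 + 3*a*b^5)) = ((27/22)*w1*w2^2 + (852683/604010)*w1*w2*w3 + (3/10)*w1*w2*w4 + (947649/60401)*w1*w3*w4 + (15/2)*w1*w4^2 + (269/110)*w2^2*w3 + (119/55)*w2^2*w4 + (37163/1254)*w2*w3^2 + (10773643/362406)*w2*w3*w4 + (27/2)*w2*w4^2 + 65*w3^3 + (767235/60401)*w3^2*w4 + (1742640/60401)*w3*w4^2 + (15/2)*w4^3) * ((2*V+U)*a*b - U*V*(3*b+5*a)) + (729*w1^6 + 1458*w1^5*w2 + 3645*w1^5*w3 + 1215*w1^5*w4 + (25029/22)*w1^4*w2^2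 + (756894591/120802)*w1^4*w2*w3 + (2511/2)*w1^4*w2*w4 + 2430*w1^4*w3^2 + (225782235/60401)*w1^4*w3*w4 + (1215/2)*w1^4*w4^2 + (5400/11)*w1^3*w2^3 + (284067801/120802)*w1^3*w2^2*w3 + (4779/22)*w1^3*w2^2*w4 + (951444765/120802)*w1^3*w2*w3^2 + (1809/22)*w1^2*w2^4 + (17452008/60401)*w1^2*w2^3*w3 + (34430265/10982)*w1^2*w2^2*w3^2 + (22005/22)*w1^2*w2^2*w4^2 + (60333399/3553)*w1^2*w2*w3^3 + (275241789/60401)*w1^2*w2*w3*w4^2 + (4509/2)*w1^2*w2*w4^3 + 17910*w1^2*w3^4 + (72605295/5491)*w1^2*w3^3*w4 + (152608050/60401)*w1^2*w3^2*w4^2 + (532658835/120802)*w1^2*w3*w4^3 + 1035*w1^2*w4^4 + (158545578/302005)*w1*w2^3*w3^2 + (11806197/17765)*w1*w2^3*w3*w4 + (4257/10)*w1*w2^3*w4^2 + (682552047/120802)*w1*w2^2*w3^3 + (250221723/120802)*w1*w2^2*w3^2*w4 + (27191301/5491)*w1*w2^2*w3*w4^2 + (11709/11)*w1*w2^2*w4^3 + (3895474555/120802)*w1*w2*w3^4 + (487101660/60401)*w1*w2*w3^3*w4 + (580121970/60401)*w1*w2*w3^2*w4^2 + (79980445/10982)*w1*w2*w3*w4^3 + 780*w1*w2*w4^4 + 31125*w1*w3^5 + (2226277725/60401)*w1*w3^4*w4 + (663201075/120802)*w1*w3^3*w4^2 + (444432375/60401)*w1*w3^2*w4^3 + (157511775/60401)*w1*w3*w4^4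 + (375/2)*w1*w4^5 + (3783/110)*w2^4*w3^2 + (7626/55)*w2^4*w3*w4 + (936/55)*w2^4*w4^2 + (31562671/60401)*w2^3*w3^2*w4 + (103543185/120802)*w2^3*w3*w4^2 + (301/11)*w2^3*w4^3 + (4095485/627)*w2^2*w3^4 + (47745590/60401)*w2^2*w3^3*w4 + (388736035/120802)*w2^2*w3^2*w4^2 + (283924195/181203)*w2^2*w3*w4^3 + (8346625/418)*w2*w3^5 + (1915980075/120802)*w2*w3^4*w4 + (345457250/60401)*w2*w3^3*w4^2 + (306322550/60401)*w2*w3^2*w4^3 + (68645025/60401)*w2*w3*w4^4 + 21645*w3^6 + (2198477415/60401)*w3^5*w4 + (104341200/5491)*w3^4*w4^2 + (1026277025/120802)*w3^3*w4^3 + (179018800/60401)*w3^2*w4^4 + (805/2)*w3*w4^5 + 5*w4^6)"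
      unfolding eU eV ea eb by algebra
    have lp: "0 < (27/22)*w1*w2^2 + (852683/604010)*w1*w2*w3 + (3/10)*w1*w2*w4 + (947649/60401)*w1*w3*w4 + (15/2)*w1*w4^2 + (269/110)*w2^2*w3 + (119/55)*w2^2*w4 + (37163/1254)*w2*w3^2 + (10773643/362406)*w2*w3*w4 + (27/2)*w2*w4^2 + 65*w3^3 + (767235/60401)*w3^2*w4 + (1742640/60401)*w3*w4^2 + (15/2)*w4^3"
      by (intro add_pos_pos mult_pos_pos zero_less_power) (simp_all add: w1p w2p w3p w4p)
    have rp: "0 \<le> 729*w1^6 + 1458*w1^5*w2 + 3645*w1^5*w3 + 1215*w1^5*w4 + (25029/22)*w1^4*w2^2 + (756894591/120802)*w1^4*w2*w3 + (2511/2)*w1^4*w2*w4 + 2430*w1^4*w3^2 + (225782235/60401)*w1^4*w3*w4 + (1215/2)*w1^4*w4^2 + (5400/11)*w1^3*w2^3 + (284067801/120802)*w1^3*w2^2*w3 + (4779/22)*w1^3*w2^2*w4 + (951444765/120802)*w1^3*w2*w3^2 + (1809/22)*w1^2*w2^4 + (17452008/60401)*w1^2*w2^3*w3 + (34430265/10982)*w1^2*w2^2*w3^2 + (22005/22)*w1^2*w2^2*w4^2 + (60333399/3553)*w1^2*w2*w3^3 + (275241789/60401)*w1^2*w2*w3*w4^2 + (4509/2)*w1^2*w2*w4^3 + 17910*w1^2*w3^4 + (72605295/5491)*w1^2*w3^3*w4 + (152608050/60401)*w1^2*w3^2*w4^2 + (532658835/120802)*w1^2*w3*w4^3 + 1035*w1^2*w4^4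 + (158545578/302005)*w1*w2^3*w3^2 + (11806197/17765)*w1*w2^3*w3*w4 + (4257/10)*w1*w2^3*w4^2 + (682552047/120802)*w1*w2^2*w3^3 + (250221723/120802)*w1*w2^2*w3^2*w4 + (27191301/5491)*w1*w2^2*w3*w4^2 + (11709/11)*w1*w2^2*w4^3 + (3895474555/120802)*w1*w2*w3^4 + (487101660/60401)*w1*w2*w3^3*w4 + (580121970/60401)*w1*w2*w3^2*w4^2 + (79980445/10982)*w1*w2*w3*w4^3 + 780*w1*w2*w4^4 + 31125*w1*w3^5 + (2226277725/60401)*w1*w3^4*w4 + (663201075/120802)*w1*w3^3*w4^2 + (444432375/60401)*w1*w3^2*w4^3 + (157511775/60401)*w1*w3*w4^4 + (375/2)*w1*w4^5 + (3783/110)*w2^4*w3^2 + (7626/55)*w2^4*w3*w4 + (936/55)*w2^4*w4^2 + (31562671/60401)*w2^3*w3^2*w4 + (103543185/120802)*w2^3*w3*w4^2 + (301/11)*w2^3*w4^3 + (4095485/627)*w2^2*w3^4 + (47745590/60401)*w2^2*w3^3*w4 + (388736035/120802)*w2^2*w3^2*w4^2 + (283924195/181203)*w2^2*w3*w4^3 + (8346625/418)*w2*w3^5 + (1915980075/120802)*w2*w3^4*w4 + (345457250/60401)*w2*w3^3*w4^2 + (306322550/60401)*w2*w3^2*w4^3 + (68645025/60401)*w2*w3*w4^4 + 21645*w3^6 + (2198477415/60401)*w3^5*w4 + (104341200/5491)*w3^4*w4^2 + (1026277025/120802)*w3^3*w4^3 + (179018800/60401)*w3^2*w4^4 + (805/2)*w3*w4^5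 + 5*w4^6"
      by (intro add_nonneg_nonneg mult_nonneg_nonneg zero_le_power) (simp_all add: w1p w2p w3p w4p less_imp_le)
    have "0 < (0 - (- (U^2*V*a^3) - 15*U^2*V*a^2*b - 30*U^2*V*a*b^2 - 10*U^2*V*b^3 + 5*U^2*a^3*b + 30*U^2*a^2*b^2 + 30*U^2*a*b^3 + 5*U^2*b^4 + 10*U*V*a^3*b + 60*U*V*a^2*b^2 + 60*U*V*a*b^3 + 10*U*V*b^4 - 20*U*a^3*b^2 - 60*U*a^2*b^3 - 30*U*a*b^4 - 2*U*b^5 - 10*V*a^3*b^2 - 30*V*a^2*b^3 - 15*V*a*b^4 - V*b^5 + 10*a^3*b^3 + 15*a^2*b^4 + 3*a*b^5))" unfolding key using lp rp Cpos by (simp add: add_pos_nonneg)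
    then have "0 < (0 - (- (U^2*V*a^3) - 15*U^2*V*a^2*b - 30*U^2*V*a*b^2 - 10*U^2*V*b^3 + 5*U^2*a^3*b + 30*U^2*a^2*b^2 + 30*U^2*a*b^3 + 5*U^2*b^4 + 10*U*V*a^3*b + 60*U*V*a^2*b^2 + 60*U*V*a*b^3 + 10*U*V*b^4 - 20*U*a^3*b^2 - 60*U*a^2*b^3 - 30*U*a*b^4 - 2*U*b^5 - 10*V*a^3*b^2 - 30*V*a^2*b^3 - 15*V*a*b^4 - V*b^5 + 10*a^3*b^3 + 15*a^2*b^4 + 3*a*b^5))" by simp
    then show False using c5 e5 by simp
  next
    case 3
    have "0 < U * (3*(a*b) - U*(3*b+5*a))" using Cpos 3 by (simp add: algebra_simps)
    then have h1: "U*(3*b+5*a) < 3*(a*b)" using pU by (simp add: zero_less_mult_iff)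
    have h2: "3*a + 5*b = 3*U" using rel 3 by simp
    have h3: "(3*a+5*b)*(3*b+5*a) = 15*(a-b)^2 + 64*(a*b)" by algebra
    have h4: "(3*a+5*b)*(3*b+5*a) = 3*(U*(3*b+5*a))" unfolding h2 by (simp add: algebra_simps)
    have "0 \<le> (a-b)^2" by simp
    moreover have "0 < a*b" using pa pb by simp
    ultimately show False using h1 h3 h4 by linarith
  qed
qed

lemma core_4:
  fixes U V a b :: real
  assumes pU: "0 < U" and pV: "0 < V" and pa: "0 < a" and pb: "0 < b"
    and c10: "coeff ([:-U,1:]^2 * [:-V,1:] * [:a,1:]^4 * [:b,1:]^4 :: real poly) 10 = 0"
    and c1: "0 < coeff ([:-U,1:]^2 * [:-V,1:] * [:a,1:]^4 * [:b,1:]^4 :: real poly) 1"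
    and c7: "coeff ([:-U,1:]^2 * [:-V,1:] * [:a,1:]^4 * [:b,1:]^4 :: real poly) 7 \<le> 0"
    and c5: "0 \<le> coeff ([:-U,1:]^2 * [:-V,1:] * [:a,1:]^4 * [:b,1:]^4 :: real poly) 5"
  shows False
proof -
  have e10: "coeff ([:-U,1:]^2 * [:-V,1:] * [:a,1:]^4 * [:b,1:]^4 :: real poly) 10 = 4*a + 4*b - 2*U - V"
    by (simp add: eval_nat_numeral; algebra)
  have rel: "4*a + 4*b = 2*U + V" using c10 e10 by simp
  have e1: "coeff ([:-U,1:]^2 * [:-V,1:] * [:a,1:]^4 * [:b,1:]^4 :: real poly) 1 = U * a^3 * b^3 * ((2*V+U)*a*b - U*V*(4*b+4*a))"
    by (simp add: eval_nat_numeral; algebra)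
  have "0 < U * a^3 * b^3" using pU pa pb by simp
  then have Cpos: "0 < ((2*V+U)*a*b - U*V*(4*b+4*a))" using c1 e1 by (metis zero_less_mult_pos)
  have e7: "coeff ([:-U,1:]^2 * [:-V,1:] * [:a,1:]^4 * [:b,1:]^4 :: real poly) 7 = - (4*U^2*V*a) - 4*U^2*V*b + 6*U^2*a^2 + 16*U^2*a*b + 6*U^2*b^2 + 12*U*V*a^2 + 32*U*V*a*b + 12*U*V*b^2 - 8*U*a^3 - 48*U*a^2*b - 48*U*a*b^2 - 8*U*b^3 - 4*V*a^3 - 24*V*a^2*b - 24*V*a*b^2 - 4*V*b^3 + a^4 + 16*a^3*b + 36*a^2*b^2 + 16*a*b^3 + b^4"
    by (simp add: eval_nat_numeral; algebra)
  have e5: "coeff ([:-U,1:]^2 * [:-V,1:] * [:a,1:]^4 * [:b,1:]^4 :: real poly) 5 = - (4*U^2*V*a^3) - 24*U^2*V*a^2*b - 24*U^2*V*a*b^2 - 4*U^2*V*b^3 + U^2*a^4 + 16*U^2*a^3*b + 36*U^2*a^2*b^2 + 16*U^2*a*b^3 + U^2*b^4 + 2*U*V*a^4 + 32*U*V*a^3*b + 72*U*V*a^2*b^2 + 32*U*V*a*b^3 + 2*U*V*b^4 - 8*U*a^4*b - 48*U*a^3*b^2 - 48*U*a^2*b^3 - 8*U*a*b^4 - 4*V*a^4*b - 24*V*a^3*b^2 - 24*V*a^2*b^3 - 4*V*a*b^4 + 6*a^4*b^2 + 16*a^3*b^3 + 6*a^2*b^4"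
    by (simp add: eval_nat_numeral; algebra)
  consider "V < U" | "U < V" | "U = V" by linarith
  then show False
  proof cases
    case 1
    define S where "S = 3*V + 2*(U-V)"
    have Sp: "0 < S" using 1 pU pV unfolding S_def by simp
    define iS where "iS = 1/S"
    have iSp: "0 < iS" using Sp unfolding iS_def by simp
    have hS: "S*iS = 1" using Sp unfolding iS_def by simp
    define w1 where "w1 = a*V*iS"
    define w2 where "w2 = a*(U-V)*iS"
    define w3 where "w3 = b*V*iS"
    define w4 where "w4 = b*(U-V)*iS"
    have w1p: "0 < w1" unfolding w1_def using iSp pa pb pU pV 1 by simp
    have w2p: "0 < w2" unfolding w2_def using iSp pa pb pU pV 1 by simp
    have w3p: "0 < w3" unfolding w3_def using iSp pa pb pU pV 1 by simp
    have w4p: "0 < w4" unfolding w4_def using iSp pa pb pU pV 1 by simp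
    have ea: "a = 3*w1 + 2*w2" unfolding w1_def w2_def using hS rel unfolding S_def by algebra
    have eb: "b = 3*w3 + 2*w4" unfolding w3_def w4_def using hS rel unfolding S_def by algebra
    have eV: "V = 4*w1 + 4*w3" unfolding w1_def w2_def w3_def w4_def using hS rel unfolding S_def by algebra
    have eU: "U = 4*w1 + 4*w3 + (4*w2 + 4*w4)" unfolding w1_def w2_def w3_def w4_def using hS rel unfolding S_def by algebra
    have key: "(- (4*U^2*V*a) - 4*U^2*V*b + 6*U^2*a^2 + 16*U^2*a*b + 6*U^2*b^2 + 12*U*V*a^2 + 32*U*V*a*b + 12*U*V*b^2 - 8*U*a^3 - 48*U*a^2*b - 48*U*a*b^2 - 8*U*b^3 - 4*V*a^3 - 24*V*a^2*b - 24*V*a*b^2 - 4*V*b^3 + a^4 + 16*a^3*b + 36*a^2*b^2 + 16*a*b^3 + b^4) = (0) * ((2*V+U)*a*b - U*V*(4*b+4*a)) + (609*w1^4 + 1624*w1^3*w2 + 1248*w1^3*w3 + 832*w1^3*w4 + 1592*w1^2*w2^2 + 2496*w1^2*w2*w3 + 1600*w1^2*w2*w4 + 1764*w1^2*w3^2 + 2352*w1^2*w3*w4 + 752*w1^2*w4^2 + 736*w1*w2^3 + 1408*w1*w2^2*w3 + 1024*w1*w2^2*w4 + 2352*w1*w2*w3^2 + 2624*w1*w2*w3*w4 + 832*w1*w2*w4^2 + 1248*w1*w3^3 + 2496*w1*w3^2*w4 + 1408*w1*w3*w4^2 + 256*w1*w4^3 + 144*w2^4 + 256*w2^3*w3 +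 256*w2^3*w4 + 752*w2^2*w3^2 + 832*w2^2*w3*w4 + 320*w2^2*w4^2 + 832*w2*w3^3 + 1600*w2*w3^2*w4 + 1024*w2*w3*w4^2 + 256*w2*w4^3 + 609*w3^4 + 1624*w3^3*w4 + 1592*w3^2*w4^2 + 736*w3*w4^3 + 144*w4^4)"
      unfolding eU eV ea eb by algebra
    have rp: "0 < 609*w1^4 + 1624*w1^3*w2 + 1248*w1^3*w3 + 832*w1^3*w4 + 1592*w1^2*w2^2 + 2496*w1^2*w2*w3 + 1600*w1^2*w2*w4 + 1764*w1^2*w3^2 + 2352*w1^2*w3*w4 + 752*w1^2*w4^2 + 736*w1*w2^3 + 1408*w1*w2^2*w3 + 1024*w1*w2^2*w4 + 2352*w1*w2*w3^2 + 2624*w1*w2*w3*w4 + 832*w1*w2*w4^2 + 1248*w1*w3^3 + 2496*w1*w3^2*w4 + 1408*w1*w3*w4^2 + 256*w1*w4^3 + 144*w2^4 + 256*w2^3*w3 + 256*w2^3*w4 + 752*w2^2*w3^2 + 832*w2^2*w3*w4 + 320*w2^2*w4^2 + 832*w2*w3^3 + 1600*w2*w3^2*w4 + 1024*w2*w3*w4^2 + 256*w2*w4^3 + 609*w3^4 + 1624*w3^3*w4 + 1592*w3^2*w4^2 + 736*w3*w4^3 + 144*w4^4"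
      by (intro add_pos_pos mult_pos_pos zero_less_power) (simp_all add: w1p w2p w3p w4p)
    have "0 < (- (4*U^2*V*a) - 4*U^2*V*b + 6*U^2*a^2 + 16*U^2*a*b + 6*U^2*b^2 + 12*U*V*a^2 + 32*U*V*a*b + 12*U*V*b^2 - 8*U*a^3 - 48*U*a^2*b - 48*U*a*b^2 - 8*U*b^3 - 4*V*a^3 - 24*V*a^2*b - 24*V*a*b^2 - 4*V*b^3 + a^4 + 16*a^3*b + 36*a^2*b^2 + 16*a*b^3 + b^4)" unfolding key using rp by simp
    then have "0 < (- (4*U^2*V*a) - 4*U^2*V*b + 6*U^2*a^2 + 16*U^2*a*b + 6*U^2*b^2 + 12*U*V*a^2 + 32*U*V*a*b + 12*U*V*b^2 - 8*U*a^3 - 48*U*a^2*b - 48*U*a*b^2 - 8*U*b^3 - 4*V*a^3 - 24*V*a^2*b - 24*V*a*b^2 - 4*V*b^3 + a^4 + 16*a^3*b + 36*a^2*b^2 + 16*a*b^3 + b^4)" by simp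
    then show False using c7 e7 by simp
  next
    case 2
    define S where "S = 3*U + (V-U)"
    have Sp: "0 < S" using 2 pU pV unfolding S_def by simp
    define iS where "iS = 1/S"
    have iSp: "0 < iS" using Sp unfolding iS_def by simp
    have hS: "S*iS = 1" using Sp unfolding iS_def by simp
    define w1 where "w1 = a*U*iS"
    define w2 where "w2 = a*(V-U)*iS"
    define w3 where "w3 = b*U*iS"
    define w4 where "w4 = b*(V-U)*iS"
    have w1p: "0 < w1" unfolding w1_def using iSp pa pb pU pV 2 by simp
    have w2p: "0 < w2" unfolding w2_def using iSp pa pb pU pV 2 by simp
    have w3p: "0 < w3" unfolding w3_def using iSp pa pb pU pV 2 by simp
    have w4p: "0 < w4" unfolding w4_def using iSp pa pb pU pV 2 by simp
    have ea: "a = 3*w1 + w2" unfolding w1_def w2_def using hS rel unfolding S_def by algebra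
    have eb: "b = 3*w3 + w4" unfolding w3_def w4_def using hS rel unfolding S_def by algebra
    have eV: "V = 4*w1 + 4*w3 + (4*w2 + 4*w4)" unfolding w1_def w2_def w3_def w4_def using hS rel unfolding S_def by algebra
    have eU: "U = 4*w1 + 4*w3" unfolding w1_def w2_def w3_def w4_def using hS rel unfolding S_def by algebra
    have key: "(0 - (- (4*U^2*V*a^3) - 24*U^2*V*a^2*b - 24*U^2*V*a*b^2 - 4*U^2*V*b^3 + U^2*a^4 + 16*U^2*a^3*b + 36*U^2*a^2*b^2 + 16*U^2*a*b^3 + U^2*b^4 + 2*U*V*a^4 + 32*U*V*a^3*b + 72*U*V*a^2*b^2 + 32*U*V*a*b^3 + 2*U*V*b^4 - 8*U*a^4*b - 48*U*a^3*b^2 - 48*U*a^2*b^3 - 8*U*a*b^4 - 4*V*a^4*b - 24*V*a^3*b^2 - 24*V*a^2*b^3 - 4*V*a*b^4 + 6*a^4*b^2 + 16*a^3*b^3 + 6*a^2*b^4)) = ((243/26)*w1^2*w3 + (60/11)*w1*w2^2 + (33/4)*w1*w2*w4 + (1863/416)*w1*w3*w4 + (3489/256)*w1*w4^2 + (1/2)*w2^3 + (5199/572)*w2^2*w3 + (37/4)*w2^2*w4 + (1119933/36608)*w2*w3^2 + (71295/832)*w2*w3*w4 + (51/4)*w2*w4^2 + (1503/32)*w3^3 + (260703/6656)*w3^2*w4 + (1648077/53248)*w3*w4^2 + (1/2)*w4^3) * ((2*V+U)*a*b - U*V*(4*b+4*a)) + (3024*w1^6 + 6048*w1^5*w2 +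 (73872/13)*w1^5*w3 + 1296*w1^5*w4 + (46368/11)*w1^4*w2^2 + (115344/13)*w1^4*w2*w3 + (1035/4)*w1^4*w4^2 + (19232/11)*w1^3*w2^3 + (2183679/572)*w1^3*w2*w3^2 + (2455/64)*w1^3*w4^3 + (3312/11)*w1^2*w2^4 + (786/13)*w1^2*w2^3*w3 + (10778/11)*w1^2*w2^3*w4 + (2114973/143)*w1^2*w2^2*w3*w4 + (118643/44)*w1^2*w2^2*w4^2 + (137330145/9152)*w1^2*w2*w3^3 + (21471381/832)*w1^2*w2*w3^2*w4 + (17743905/832)*w1^2*w2*w3*w4^2 + (118071/64)*w1^2*w2*w4^3 + (2017791/104)*w1^2*w3^4 + (45460971/1664)*w1^2*w3^3*w4 + (224650377/13312)*w1^2*w3^2*w4^2 + (94361115/13312)*w1^2*w3*w4^3 + (8997/32)*w1^2*w4^4 + (31158/143)*w1*w2^4*w3 + (3194/11)*w1*w2^4*w4 + (814497/572)*w1*w2^3*w3^2 + (1048369/143)*w1*w2^3*w3*w4 + (13039/11)*w1*w2^3*w4^2 + (63939537/9152)*w1*w2^2*w3^3 + (281332503/9152)*w1*w2^2*w3^2*w4 + (133961761/9152)*w1*w2^2*w3*w4^2 + (42239/32)*w1*w2^2*w4^3 + (21385197/704)*w1*w2*w3^4 + (967496787/18304)*w1*w2*w3^3*w4 + (6474627891/146432)*w1*w2*w3^2*w4^2 + (127983771/13312)*w1*w2*w3*w4^3 + (17247/32)*w1*w2*w4^4 + (206955/8)*w1*w3^5 + (74290779/1664)*w1*w3^4*w4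 + (413403273/13312)*w1*w3^3*w4^2 + (178068369/13312)*w1*w3^2*w4^3 + (10172289/6656)*w1*w3*w4^4 + 36*w1*w4^5 + 36*w2^5*w3 + 12*w2^5*w4 + (14238/143)*w2^4*w3^2 + (62246/143)*w2^4*w3*w4 + 28*w2^4*w4^2 + (1204945/4576)*w2^3*w3^3 + (16062247/4576)*w2^3*w3^2*w4 + (634643/1144)*w2^3*w3*w4^2 + (73181547/9152)*w2^2*w3^4 + (5493591/286)*w2^2*w3^3*w4 + (722366707/73216)*w2^2*w3^2*w4^2 + (3060851/6656)*w2^2*w3*w4^3 + (20023317/1144)*w2*w3^5 + (652327155/18304)*w2*w3^4*w4 + (4582117521/146432)*w2*w3^3*w4^2 + (118002555/13312)*w2*w3^2*w4^3 + (2065971/6656)*w2*w3*w4^4 + 12*w2*w4^5 + 12042*w3^6 + (2661597/104)*w3^5*w4 + (18423495/832)*w3^4*w4^2 + (2242699/208)*w3^3*w4^3 + (1608141/832)*w3^2*w4^4)"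
      unfolding eU eV ea eb by algebra
    have lp: "0 < (243/26)*w1^2*w3 + (60/11)*w1*w2^2 + (33/4)*w1*w2*w4 + (1863/416)*w1*w3*w4 + (3489/256)*w1*w4^2 + (1/2)*w2^3 + (5199/572)*w2^2*w3 + (37/4)*w2^2*w4 + (1119933/36608)*w2*w3^2 + (71295/832)*w2*w3*w4 + (51/4)*w2*w4^2 + (1503/32)*w3^3 + (260703/6656)*w3^2*w4 + (1648077/53248)*w3*w4^2 + (1/2)*w4^3"
      by (intro add_pos_pos mult_pos_pos zero_less_power) (simp_all add: w1p w2p w3p w4p)
    have rp: "0 \<le> 3024*w1^6 + 6048*w1^5*w2 + (73872/13)*w1^5*w3 + 1296*w1^5*w4 + (46368/11)*w1^4*w2^2 + (115344/13)*w1^4*w2*w3 + (1035/4)*w1^4*w4^2 + (19232/11)*w1^3*w2^3 + (2183679/572)*w1^3*w2*w3^2 + (2455/64)*w1^3*w4^3 + (3312/11)*w1^2*w2^4 + (786/13)*w1^2*w2^3*w3 + (10778/11)*w1^2*w2^3*w4 + (2114973/143)*w1^2*w2^2*w3*w4 + (118643/44)*w1^2*w2^2*w4^2 + (137330145/9152)*w1^2*w2*w3^3 + (21471381/832)*w1^2*w2*w3^2*w4 + (17743905/832)*w1^2*w2*w3*w4^2 + (118071/64)*w1^2*w2*w4^3 + (2017791/104)*w1^2*w3^4 + (45460971/1664)*w1^2*w3^3*w4 + (224650377/13312)*w1^2*w3^2*w4^2 + (94361115/13312)*w1^2*w3*w4^3 + (8997/32)*w1^2*w4^4 + (31158/143)*w1*w2^4*w3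 + (3194/11)*w1*w2^4*w4 + (814497/572)*w1*w2^3*w3^2 + (1048369/143)*w1*w2^3*w3*w4 + (13039/11)*w1*w2^3*w4^2 + (63939537/9152)*w1*w2^2*w3^3 + (281332503/9152)*w1*w2^2*w3^2*w4 + (133961761/9152)*w1*w2^2*w3*w4^2 + (42239/32)*w1*w2^2*w4^3 + (21385197/704)*w1*w2*w3^4 + (967496787/18304)*w1*w2*w3^3*w4 + (6474627891/146432)*w1*w2*w3^2*w4^2 + (127983771/13312)*w1*w2*w3*w4^3 + (17247/32)*w1*w2*w4^4 + (206955/8)*w1*w3^5 + (74290779/1664)*w1*w3^4*w4 + (413403273/13312)*w1*w3^3*w4^2 + (178068369/13312)*w1*w3^2*w4^3 + (10172289/6656)*w1*w3*w4^4 + 36*w1*w4^5 + 36*w2^5*w3 + 12*w2^5*w4 + (14238/143)*w2^4*w3^2 + (62246/143)*w2^4*w3*w4 + 28*w2^4*w4^2 + (1204945/4576)*w2^3*w3^3 + (16062247/4576)*w2^3*w3^2*w4 + (634643/1144)*w2^3*w3*w4^2 + (73181547/9152)*w2^2*w3^4 + (5493591/286)*w2^2*w3^3*w4 + (722366707/73216)*w2^2*w3^2*w4^2 + (3060851/6656)*w2^2*w3*w4^3 + (20023317/1144)*w2*w3^5 + (652327155/18304)*w2*w3^4*w4 + (4582117521/146432)*w2*w3^3*w4^2 + (118002555/13312)*w2*w3^2*w4^3 + (2065971/6656)*w2*w3*w4^4 + 12*w2*w4^5 + 12042*w3^6 + (2661597/104)*w3^5*w4 + (18423495/832)*w3^4*w4^2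 + (2242699/208)*w3^3*w4^3 + (1608141/832)*w3^2*w4^4"
      by (intro add_nonneg_nonneg mult_nonneg_nonneg zero_le_power) (simp_all add: w1p w2p w3p w4p less_imp_le)
    have "0 < (0 - (- (4*U^2*V*a^3) - 24*U^2*V*a^2*b - 24*U^2*V*a*b^2 - 4*U^2*V*b^3 + U^2*a^4 + 16*U^2*a^3*b + 36*U^2*a^2*b^2 + 16*U^2*a*b^3 + U^2*b^4 + 2*U*V*a^4 + 32*U*V*a^3*b + 72*U*V*a^2*b^2 + 32*U*V*a*b^3 + 2*U*V*b^4 - 8*U*a^4*b - 48*U*a^3*b^2 - 48*U*a^2*b^3 - 8*U*a*b^4 - 4*V*a^4*b - 24*V*a^3*b^2 - 24*V*a^2*b^3 - 4*V*a*b^4 + 6*a^4*b^2 + 16*a^3*b^3 + 6*a^2*b^4))" unfolding key using lp rp Cpos by (simp add: add_pos_nonneg)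
    then have "0 < (0 - (- (4*U^2*V*a^3) - 24*U^2*V*a^2*b - 24*U^2*V*a*b^2 - 4*U^2*V*b^3 + U^2*a^4 + 16*U^2*a^3*b + 36*U^2*a^2*b^2 + 16*U^2*a*b^3 + U^2*b^4 + 2*U*V*a^4 + 32*U*V*a^3*b + 72*U*V*a^2*b^2 + 32*U*V*a*b^3 + 2*U*V*b^4 - 8*U*a^4*b - 48*U*a^3*b^2 - 48*U*a^2*b^3 - 8*U*a*b^4 - 4*V*a^4*b - 24*V*a^3*b^2 - 24*V*a^2*b^3 - 4*V*a*b^4 + 6*a^4*b^2 + 16*a^3*b^3 + 6*a^2*b^4))" by simp
    then show False using c5 e5 by simp
  next
    case 3
    have "0 < U * (3*(a*b) - U*(4*b+4*a))" using Cpos 3 by (simp add: algebra_simps)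
    then have h1: "U*(4*b+4*a) < 3*(a*b)" using pU by (simp add: zero_less_mult_iff)
    have h2: "4*a + 4*b = 3*U" using rel 3 by simp
    have h3: "(4*a+4*b)*(4*b+4*a) = 16*(a-b)^2 + 64*(a*b)" by algebra
    have h4: "(4*a+4*b)*(4*b+4*a) = 3*(U*(4*b+4*a))" unfolding h2 by (simp add: algebra_simps)
    have "0 \<le> (a-b)^2" by simp
    moreover have "0 < a*b" using pa pb by simp
    ultimately show False using h1 h3 h4 by linarith
  qed
qed

lemma core_5:
  fixes U V a b :: real
  assumes pU: "0 < U" and pV: "0 < V" and pa: "0 < a" and pb: "0 < b"
    and c10: "coeff ([:-U,1:]^2 * [:-V,1:] * [:a,1:]^5 * [:b,1:]^3 :: real poly) 10 = 0"
    and c1: "0 < coeff ([:-U,1:]^2 * [:-V,1:] * [:a,1:]^5 * [:b,1:]^3 :: real poly) 1"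
    and c7: "coeff ([:-U,1:]^2 * [:-V,1:] * [:a,1:]^5 * [:b,1:]^3 :: real poly) 7 \<le> 0"
    and c5: "0 \<le> coeff ([:-U,1:]^2 * [:-V,1:] * [:a,1:]^5 * [:b,1:]^3 :: real poly) 5"
  shows False
proof -
  have e10: "coeff ([:-U,1:]^2 * [:-V,1:] * [:a,1:]^5 * [:b,1:]^3 :: real poly) 10 = 5*a + 3*b - 2*U - V"
    by (simp add: eval_nat_numeral; algebra)
  have rel: "5*a + 3*b = 2*U + V" using c10 e10 by simp
  have e1: "coeff ([:-U,1:]^2 * [:-V,1:] * [:a,1:]^5 * [:b,1:]^3 :: real poly) 1 = U * a^4 * b^2 * ((2*V+U)*a*b - U*V*(5*b+3*a))"
    by (simp add: eval_nat_numeral; algebra)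
  have "0 < U * a^4 * b^2" using pU pa pb by simp
  then have Cpos: "0 < ((2*V+U)*a*b - U*V*(5*b+3*a))" using c1 e1 by (metis zero_less_mult_pos)
  have e7: "coeff ([:-U,1:]^2 * [:-V,1:] * [:a,1:]^5 * [:b,1:]^3 :: real poly) 7 = - (5*U^2*V*a) - 3*U^2*V*b + 10*U^2*a^2 + 15*U^2*a*b + 3*U^2*b^2 + 20*U*V*a^2 + 30*U*V*a*b + 6*U*V*b^2 - 20*U*a^3 - 60*U*a^2*b - 30*U*a*b^2 - 2*U*b^3 - 10*V*a^3 - 30*V*a^2*b - 15*V*a*b^2 - V*b^3 + 5*a^4 + 30*a^3*b + 30*a^2*b^2 + 5*a*b^3"
    by (simp add: eval_nat_numeral; algebra)
  have e5: "coeff ([:-U,1:]^2 * [:-V,1:] * [:a,1:]^5 * [:b,1:]^3 :: real poly) 5 = - (10*U^2*V*a^3) - 30*U^2*V*a^2*b - 15*U^2*V*a*b^2 - U^2*V*b^3 + 5*U^2*a^4 + 30*U^2*a^3*b + 30*U^2*a^2*b^2 + 5*U^2*a*b^3 + 10*U*V*a^4 + 60*U*V*a^3*b + 60*U*V*a^2*b^2 + 10*U*V*a*b^3 - 2*U*a^5 - 30*U*a^4*b - 60*U*a^3*b^2 - 20*U*a^2*b^3 - V*a^5 - 15*V*a^4*b - 30*V*a^3*b^2 - 10*V*a^2*b^3 + 3*a^5*b + 15*a^4*b^2 + 10*a^3*b^3"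
    by (simp add: eval_nat_numeral; algebra)
  consider "V < U" | "U < V" | "U = V" by linarith
  then show False
  proof cases
    case 1
    define S where "S = 3*V + 2*(U-V)"
    have Sp: "0 < S" using 1 pU pV unfolding S_def by simp
    define iS where "iS = 1/S"
    have iSp: "0 < iS" using Sp unfolding iS_def by simp
    have hS: "S*iS = 1" using Sp unfolding iS_def by simp
    define w1 where "w1 = a*V*iS"
    define w2 where "w2 = a*(U-V)*iS"
    define w3 where "w3 = b*V*iS"
    define w4 where "w4 = b*(U-V)*iS"
    have w1p: "0 < w1" unfolding w1_def using iSp pa pb pU pV 1 by simp
    have w2p: "0 < w2" unfolding w2_def using iSp pa pb pU pV 1 by simp
    have w3p: "0 < w3" unfolding w3_def using iSp pa pb pU pV 1 by simp
    have w4p: "0 < w4" unfolding w4_def using iSp pa pb pU pV 1 by simp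
    have ea: "a = 3*w1 + 2*w2" unfolding w1_def w2_def using hS rel unfolding S_def by algebra
    have eb: "b = 3*w3 + 2*w4" unfolding w3_def w4_def using hS rel unfolding S_def by algebra
    have eV: "V = 5*w1 + 3*w3" unfolding w1_def w2_def w3_def w4_def using hS rel unfolding S_def by algebra
    have eU: "U = 5*w1 + 3*w3 + (5*w2 + 3*w4)" unfolding w1_def w2_def w3_def w4_def using hS rel unfolding S_def by algebra
    have key: "(- (5*U^2*V*a) - 3*U^2*V*b + 10*U^2*a^2 + 15*U^2*a*b + 3*U^2*b^2 + 20*U*V*a^2 + 30*U*V*a*b + 6*U*V*b^2 - 20*U*a^3 - 60*U*a^2*b - 30*U*a*b^2 - 2*U*b^3 - 10*V*a^3 - 30*V*a^2*b - 15*V*a*b^2 - V*b^3 + 5*a^4 + 30*a^3*b + 30*a^2*b^2 + 5*a*b^3) = (0) * ((2*V+U)*a*b - U*V*(5*b+3*a)) + (1230*w1^4 + 3280*w1^3*w2 + 1575*w1^3*w3 + 1050*w1^3*w4 + 3155*w1^2*w2^2 + 3150*w1^2*w2*w3 + 1950*w1^2*w2*w4 + 1620*w1^2*w3^2 + 2160*w1^2*w3*w4 + 675*w1^2*w4^2 + 1430*w1*w2^3 + 1725*w1*w2^2*w3 + 1200*w1*w2^2*w4 + 2160*w1*w2*w3^2 + 2430*w1*w2*w3*w4 + 750*w1*w2*w4^2 + 810*w1*w3^3 + 1620*w1*w3^2*w4 + 945*w1*w3*w4^2 + 180*w1*w4^3 + 280*w2^4 + 300*w2^3*w3 + 300*w2^3*w4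 + 720*w2^2*w3^2 + 810*w2^2*w3*w4 + 300*w2^2*w4^2 + 540*w2*w3^3 + 1080*w2*w3^2*w4 + 720*w2*w3*w4^2 + 180*w2*w4^3 + 243*w3^4 + 648*w3^3*w4 + 648*w3^2*w4^2 + 306*w3*w4^3 + 60*w4^4)"
      unfolding eU eV ea eb by algebra
    have rp: "0 < 1230*w1^4 + 3280*w1^3*w2 + 1575*w1^3*w3 + 1050*w1^3*w4 + 3155*w1^2*w2^2 + 3150*w1^2*w2*w3 + 1950*w1^2*w2*w4 + 1620*w1^2*w3^2 + 2160*w1^2*w3*w4 + 675*w1^2*w4^2 + 1430*w1*w2^3 + 1725*w1*w2^2*w3 + 1200*w1*w2^2*w4 + 2160*w1*w2*w3^2 + 2430*w1*w2*w3*w4 + 750*w1*w2*w4^2 + 810*w1*w3^3 + 1620*w1*w3^2*w4 + 945*w1*w3*w4^2 + 180*w1*w4^3 + 280*w2^4 + 300*w2^3*w3 + 300*w2^3*w4 + 720*w2^2*w3^2 + 810*w2^2*w3*w4 + 300*w2^2*w4^2 + 540*w2*w3^3 + 1080*w2*w3^2*w4 + 720*w2*w3*w4^2 + 180*w2*w4^3 + 243*w3^4 + 648*w3^3*w4 + 648*w3^2*w4^2 + 306*w3*w4^3 + 60*w4^4"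
      by (intro add_pos_pos mult_pos_pos zero_less_power) (simp_all add: w1p w2p w3p w4p)
    have "0 < (- (5*U^2*V*a) - 3*U^2*V*b + 10*U^2*a^2 + 15*U^2*a*b + 3*U^2*b^2 + 20*U*V*a^2 + 30*U*V*a*b + 6*U*V*b^2 - 20*U*a^3 - 60*U*a^2*b - 30*U*a*b^2 - 2*U*b^3 - 10*V*a^3 - 30*V*a^2*b - 15*V*a*b^2 - V*b^3 + 5*a^4 + 30*a^3*b + 30*a^2*b^2 + 5*a*b^3)" unfolding key using rp by simp
    then have "0 < (- (5*U^2*V*a) - 3*U^2*V*b + 10*U^2*a^2 + 15*U^2*a*b + 3*U^2*b^2 + 20*U*V*a^2 + 30*U*V*a*b + 6*U*V*b^2 - 20*U*a^3 - 60*U*a^2*b - 30*U*a*b^2 - 2*U*b^3 - 10*V*a^3 - 30*V*a^2*b - 15*V*a*b^2 - V*b^3 + 5*a^4 + 30*a^3*b + 30*a^2*b^2 + 5*a*b^3)" by simp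
    then show False using c7 e7 by simp
  next
    case 2
    define S where "S = 3*U + (V-U)"
    have Sp: "0 < S" using 2 pU pV unfolding S_def by simp
    define iS where "iS = 1/S"
    have iSp: "0 < iS" using Sp unfolding iS_def by simp
    have hS: "S*iS = 1" using Sp unfolding iS_def by simp
    define w1 where "w1 = a*U*iS"
    define w2 where "w2 = a*(V-U)*iS"
    define w3 where "w3 = b*U*iS"
    define w4 where "w4 = b*(V-U)*iS"
    have w1p: "0 < w1" unfolding w1_def using iSp pa pb pU pV 2 by simp
    have w2p: "0 < w2" unfolding w2_def using iSp pa pb pU pV 2 by simp
    have w3p: "0 < w3" unfolding w3_def using iSp pa pb pU pV 2 by simp
    have w4p: "0 < w4" unfolding w4_def using iSp pa pb pU pV 2 by simp
    have ea: "a = 3*w1 + w2" unfolding w1_def w2_def using hS rel unfolding S_def by algebra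
    have eb: "b = 3*w3 + w4" unfolding w3_def w4_def using hS rel unfolding S_def by algebra
    have eV: "V = 5*w1 + 3*w3 + (5*w2 + 3*w4)" unfolding w1_def w2_def w3_def w4_def using hS rel unfolding S_def by algebra
    have eU: "U = 5*w1 + 3*w3" unfolding w1_def w2_def w3_def w4_def using hS rel unfolding S_def by algebra
    have key: "(0 - (- (10*U^2*V*a^3) - 30*U^2*V*a^2*b - 15*U^2*V*a*b^2 - U^2*V*b^3 + 5*U^2*a^4 + 30*U^2*a^3*b + 30*U^2*a^2*b^2 + 5*U^2*a*b^3 + 10*U*V*a^4 + 60*U*V*a^3*b + 60*U*V*a^2*b^2 + 10*U*V*a*b^3 - 2*U*a^5 - 30*U*a^4*b - 60*U*a^3*b^2 - 20*U*a^2*b^3 - V*a^5 - 15*V*a^4*b - 30*V*a^3*b^2 - 10*V*a^2*b^3 + 3*a^5*b + 15*a^4*b^2 + 10*a^3*b^3)) = (9*w1^2*w3 + 3*w1^2*w4 + (89/24)*w1*w2^2 + 3*w1*w2*w3 + 43*w1*w2*w4 + 30*w1*w3^2 + (91/5)*w1*w3*w4 + (46/3)*w1*w4^2 + (15/2)*w2^3 + (15227/180)*w2^2*w3 + (1741/135)*w2^2*w4 + (9/5)*w2*w3^2 + 17*w2*w3*w4 + 2*w2*w4^2) * ((2*V+U)*a*b - U*V*(5*b+3*a)) + (7020*w1^6 + 14040*w1^5*w2 + (37275/8)*w1^4*w2^2 + (29375/24)*w1^3*w2^2*w4 + 3810*w1^3*w2*w4^2 + 10575*w1^3*w3^3 +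 11682*w1^3*w3^2*w4 + 3156*w1^3*w3*w4^2 + (3758/3)*w1^3*w4^3 + (8625/8)*w1^2*w2^4 + (423665/24)*w1^2*w2^3*w3 + (206635/72)*w1^2*w2^3*w4 + (296363/12)*w1^2*w2^2*w3^2 + (620533/24)*w1^2*w2^2*w3*w4 + (988001/216)*w1^2*w2^2*w4^2 + 9468*w1^2*w2*w3^3 + 14070*w1^2*w2*w3^2*w4 + 14932*w1^2*w2*w3*w4^2 + (9044/3)*w1^2*w2*w4^3 + 17145*w1^2*w3^4 + 24705*w1^2*w3^3*w4 + 11925*w1^2*w3^2*w4^2 + (24262/5)*w1^2*w3*w4^3 + 769*w1^2*w4^4 + (805/2)*w1*w2^5 + (192305/24)*w1*w2^4*w3 + (48335/36)*w1*w2^4*w4 + (829099/24)*w1*w2^3*w3^2 + (391961/24)*w1*w2^3*w3*w4 + (161707/108)*w1*w2^3*w4^2 + (237841/8)*w1*w2^2*w3^3 + (154587/4)*w1*w2^2*w3^2*w4 + (3961753/360)*w1*w2^2*w3*w4^2 + (26719/45)*w1*w2^2*w4^3 + 9585*w1*w2*w3^4 + 13725*w1*w2*w3^3*w4 + (57588/5)*w1*w2*w3^2*w4^2 + (14324/5)*w1*w2*w3*w4^3 + 52*w1*w2*w4^4 + 7695*w1*w3^5 + 13932*w1*w3^4*w4 + 7911*w1*w3^3*w4^2 + 2904*w1*w3^2*w4^3 + 510*w1*w3*w4^4 + 5*w2^6 + (375/2)*w2^5*w3 + (26297/12)*w2^4*w3^2 + (163/27)*w2^4*w4^2 + (69493/4)*w2^3*w3^3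 + (32533/4)*w2^3*w3^2*w4 + (17422/45)*w2^3*w3*w4^2 + (1468/45)*w2^3*w4^3 + (45681/4)*w2^2*w3^4 + 17688*w2^2*w3^3*w4 + (332837/60)*w2^2*w3^2*w4^2 + (895/3)*w2^2*w3*w4^3 + 18*w2^2*w4^4 + 1458*w2*w3^5 + 3834*w2*w3^4*w4 + 3006*w2*w3^3*w4^2 + 630*w2*w3^2*w4^3 + 729*w3^6 + 1458*w3^5*w4 + 972*w3^4*w4^2 + 270*w3^3*w4^3 + 27*w3^2*w4^4)"
      unfolding eU eV ea eb by algebra
    have lp: "0 < 9*w1^2*w3 + 3*w1^2*w4 + (89/24)*w1*w2^2 + 3*w1*w2*w3 + 43*w1*w2*w4 + 30*w1*w3^2 + (91/5)*w1*w3*w4 + (46/3)*w1*w4^2 + (15/2)*w2^3 + (15227/180)*w2^2*w3 + (1741/135)*w2^2*w4 + (9/5)*w2*w3^2 + 17*w2*w3*w4 + 2*w2*w4^2"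
      by (intro add_pos_pos mult_pos_pos zero_less_power) (simp_all add: w1p w2p w3p w4p)
    have rp: "0 \<le> 7020*w1^6 + 14040*w1^5*w2 + (37275/8)*w1^4*w2^2 + (29375/24)*w1^3*w2^2*w4 + 3810*w1^3*w2*w4^2 + 10575*w1^3*w3^3 + 11682*w1^3*w3^2*w4 + 3156*w1^3*w3*w4^2 + (3758/3)*w1^3*w4^3 + (8625/8)*w1^2*w2^4 + (423665/24)*w1^2*w2^3*w3 + (206635/72)*w1^2*w2^3*w4 + (296363/12)*w1^2*w2^2*w3^2 + (620533/24)*w1^2*w2^2*w3*w4 + (988001/216)*w1^2*w2^2*w4^2 + 9468*w1^2*w2*w3^3 + 14070*w1^2*w2*w3^2*w4 + 14932*w1^2*w2*w3*w4^2 + (9044/3)*w1^2*w2*w4^3 + 17145*w1^2*w3^4 + 24705*w1^2*w3^3*w4 + 11925*w1^2*w3^2*w4^2 + (24262/5)*w1^2*w3*w4^3 + 769*w1^2*w4^4 + (805/2)*w1*w2^5 + (192305/24)*w1*w2^4*w3 + (48335/36)*w1*w2^4*w4 + (829099/24)*w1*w2^3*w3^2 + (391961/24)*w1*w2^3*w3*w4 + (161707/108)*w1*w2^3*w4^2 + (237841/8)*w1*w2^2*w3^3 + (154587/4)*w1*w2^2*w3^2*w4 + (3961753/360)*w1*w2^2*w3*w4^2 + (26719/45)*w1*w2^2*w4^3 + 9585*w1*w2*w3^4 + 13725*w1*w2*w3^3*w4 + (57588/5)*w1*w2*w3^2*w4^2 + (14324/5)*w1*w2*w3*w4^3 + 52*w1*w2*w4^4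 + 7695*w1*w3^5 + 13932*w1*w3^4*w4 + 7911*w1*w3^3*w4^2 + 2904*w1*w3^2*w4^3 + 510*w1*w3*w4^4 + 5*w2^6 + (375/2)*w2^5*w3 + (26297/12)*w2^4*w3^2 + (163/27)*w2^4*w4^2 + (69493/4)*w2^3*w3^3 + (32533/4)*w2^3*w3^2*w4 + (17422/45)*w2^3*w3*w4^2 + (1468/45)*w2^3*w4^3 + (45681/4)*w2^2*w3^4 + 17688*w2^2*w3^3*w4 + (332837/60)*w2^2*w3^2*w4^2 + (895/3)*w2^2*w3*w4^3 + 18*w2^2*w4^4 + 1458*w2*w3^5 + 3834*w2*w3^4*w4 + 3006*w2*w3^3*w4^2 + 630*w2*w3^2*w4^3 + 729*w3^6 + 1458*w3^5*w4 + 972*w3^4*w4^2 + 270*w3^3*w4^3 + 27*w3^2*w4^4"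
      by (intro add_nonneg_nonneg mult_nonneg_nonneg zero_le_power) (simp_all add: w1p w2p w3p w4p less_imp_le)
    have "0 < (0 - (- (10*U^2*V*a^3) - 30*U^2*V*a^2*b - 15*U^2*V*a*b^2 - U^2*V*b^3 + 5*U^2*a^4 + 30*U^2*a^3*b + 30*U^2*a^2*b^2 + 5*U^2*a*b^3 + 10*U*V*a^4 + 60*U*V*a^3*b + 60*U*V*a^2*b^2 + 10*U*V*a*b^3 - 2*U*a^5 - 30*U*a^4*b - 60*U*a^3*b^2 - 20*U*a^2*b^3 - V*a^5 - 15*V*a^4*b - 30*V*a^3*b^2 - 10*V*a^2*b^3 + 3*a^5*b + 15*a^4*b^2 + 10*a^3*b^3))" unfolding key using lp rp Cpos by (simp add: add_pos_nonneg)
    then have "0 < (0 - (- (10*U^2*V*a^3) - 30*U^2*V*a^2*b - 15*U^2*V*a*b^2 - U^2*V*b^3 + 5*U^2*a^4 + 30*U^2*a^3*b + 30*U^2*a^2*b^2 + 5*U^2*a*b^3 + 10*U*V*a^4 + 60*U*V*a^3*b + 60*U*V*a^2*b^2 + 10*U*V*a*b^3 - 2*U*a^5 - 30*U*a^4*b - 60*U*a^3*b^2 - 20*U*a^2*b^3 - V*a^5 - 15*V*a^4*b - 30*V*a^3*b^2 - 10*V*a^2*b^3 + 3*a^5*b + 15*a^4*b^2 + 10*a^3*b^3))" by simp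
    then show False using c5 e5 by simp
  next
    case 3
    have "0 < U * (3*(a*b) - U*(5*b+3*a))" using Cpos 3 by (simp add: algebra_simps)
    then have h1: "U*(5*b+3*a) < 3*(a*b)" using pU by (simp add: zero_less_mult_iff)
    have h2: "5*a + 3*b = 3*U" using rel 3 by simp
    have h3: "(5*a+3*b)*(5*b+3*a) = 15*(a-b)^2 + 64*(a*b)" by algebra
    have h4: "(5*a+3*b)*(5*b+3*a) = 3*(U*(5*b+3*a))" unfolding h2 by (simp add: algebra_simps)
    have "0 \<le> (a-b)^2" by simp
    moreover have "0 < a*b" using pa pb by simp
    ultimately show False using h1 h3 h4 by linarith
  qed
qed

lemma core_6:
  fixes U V a b :: real
  assumes pU: "0 < U" and pV: "0 < V" and pa: "0 < a" and pb: "0 < b"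
    and c10: "coeff ([:-U,1:]^2 * [:-V,1:] * [:a,1:]^6 * [:b,1:]^2 :: real poly) 10 = 0"
    and c1: "0 < coeff ([:-U,1:]^2 * [:-V,1:] * [:a,1:]^6 * [:b,1:]^2 :: real poly) 1"
    and c7: "coeff ([:-U,1:]^2 * [:-V,1:] * [:a,1:]^6 * [:b,1:]^2 :: real poly) 7 \<le> 0"
    and c5: "0 \<le> coeff ([:-U,1:]^2 * [:-V,1:] * [:a,1:]^6 * [:b,1:]^2 :: real poly) 5"
  shows False
proof -
  have e10: "coeff ([:-U,1:]^2 * [:-V,1:] * [:a,1:]^6 * [:b,1:]^2 :: real poly) 10 = 6*a + 2*b - 2*U - V"
    by (simp add: eval_nat_numeral; algebra)
  have rel: "6*a + 2*b = 2*U + V" using c10 e10 by simp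
  have e1: "coeff ([:-U,1:]^2 * [:-V,1:] * [:a,1:]^6 * [:b,1:]^2 :: real poly) 1 = U * a^5 * b^1 * ((2*V+U)*a*b - U*V*(6*b+2*a))"
    by (simp add: eval_nat_numeral; algebra)
  have "0 < U * a^5 * b^1" using pU pa pb by simp
  then have Cpos: "0 < ((2*V+U)*a*b - U*V*(6*b+2*a))" using c1 e1 by (metis zero_less_mult_pos)
  have e7: "coeff ([:-U,1:]^2 * [:-V,1:] * [:a,1:]^6 * [:b,1:]^2 :: real poly) 7 = - (6*U^2*V*a) - 2*U^2*V*b + 15*U^2*a^2 + 12*U^2*a*b + U^2*b^2 + 30*U*V*a^2 + 24*U*V*a*b + 2*U*V*b^2 - 40*U*a^3 - 60*U*a^2*b - 12*U*a*b^2 - 20*V*a^3 - 30*V*a^2*b - 6*V*a*b^2 + 15*a^4 + 40*a^3*b + 15*a^2*b^2"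
    by (simp add: eval_nat_numeral; algebra)
  have e5: "coeff ([:-U,1:]^2 * [:-V,1:] * [:a,1:]^6 * [:b,1:]^2 :: real poly) 5 = - (20*U^2*V*a^3) - 30*U^2*V*a^2*b - 6*U^2*V*a*b^2 + 15*U^2*a^4 + 40*U^2*a^3*b + 15*U^2*a^2*b^2 + 30*U*V*a^4 + 80*U*V*a^3*b + 30*U*V*a^2*b^2 - 12*U*a^5 - 60*U*a^4*b - 40*U*a^3*b^2 - 6*V*a^5 - 30*V*a^4*b - 20*V*a^3*b^2 + a^6 + 12*a^5*b + 15*a^4*b^2"
    by (simp add: eval_nat_numeral; algebra)
  consider "V < U" | "U < V" | "U = V" by linarith
  then show False
  proof cases
    case 1
    define S where "S = 3*V + 2*(U-V)"
    have Sp: "0 < S" using 1 pU pV unfolding S_def by simp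
    define iS where "iS = 1/S"
    have iSp: "0 < iS" using Sp unfolding iS_def by simp
    have hS: "S*iS = 1" using Sp unfolding iS_def by simp
    define w1 where "w1 = a*V*iS"
    define w2 where "w2 = a*(U-V)*iS"
    define w3 where "w3 = b*V*iS"
    define w4 where "w4 = b*(U-V)*iS"
    have w1p: "0 < w1" unfolding w1_def using iSp pa pb pU pV 1 by simp
    have w2p: "0 < w2" unfolding w2_def using iSp pa pb pU pV 1 by simp
    have w3p: "0 < w3" unfolding w3_def using iSp pa pb pU pV 1 by simp
    have w4p: "0 < w4" unfolding w4_def using iSp pa pb pU pV 1 by simp
    have ea: "a = 3*w1 + 2*w2" unfolding w1_def w2_def using hS rel unfolding S_def by algebra
    have eb: "b = 3*w3 + 2*w4" unfolding w3_def w4_def using hS rel unfolding S_def by algebra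
    have eV: "V = 6*w1 + 2*w3" unfolding w1_def w2_def w3_def w4_def using hS rel unfolding S_def by algebra
    have eU: "U = 6*w1 + 2*w3 + (6*w2 + 2*w4)" unfolding w1_def w2_def w3_def w4_def using hS rel unfolding S_def by algebra
    have key: "(- (6*U^2*V*a) - 2*U^2*V*b + 15*U^2*a^2 + 12*U^2*a*b + U^2*b^2 + 30*U*V*a^2 + 24*U*V*a*b + 2*U*V*b^2 - 40*U*a^3 - 60*U*a^2*b - 12*U*a*b^2 - 20*V*a^3 - 30*V*a^2*b - 6*V*a*b^2 + 15*a^4 + 40*a^3*b + 15*a^2*b^2) = (0) * ((2*V+U)*a*b - U*V*(6*b+2*a)) + (2187*w1^4 + 5832*w1^3*w2 + 1620*w1^3*w3 + 1080*w1^3*w4 + 5508*w1^2*w2^2 + 3240*w1^2*w2*w3 + 1944*w1^2*w2*w4 + 1215*w1^2*w3^2 + 1620*w1^2*w3*w4 + 504*w1^2*w4^2 + 2448*w1*w2^3 + 1728*w1*w2^2*w3 + 1152*w1*w2^2*w4 + 1620*w1*w2*w3^2 + 1872*w1*w2*w3*w4 + 576*w1*w2*w4^2 + 396*w1*w3^3 + 792*w1*w3^2*w4 + 480*w1*w3*w4^2 + 96*w1*w4^3 + 480*w2^4 + 288*w2^3*w3 + 288*w2^3*w4 + 576*w2^2*w3^2 + 672*w2^2*w3*w4 + 240*w2^2*w4^2 + 264*w2*w3^3 + 552*w2*w3^2*w4 + 384*w2*w3*w4^2 + 96*w2*w4^3 + 60*w3^4 + 160*w3^3*w4 + 164*w3^2*w4^2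 + 80*w3*w4^3 + 16*w4^4)"
      unfolding eU eV ea eb by algebra
    have rp: "0 < 2187*w1^4 + 5832*w1^3*w2 + 1620*w1^3*w3 + 1080*w1^3*w4 + 5508*w1^2*w2^2 + 3240*w1^2*w2*w3 + 1944*w1^2*w2*w4 + 1215*w1^2*w3^2 + 1620*w1^2*w3*w4 + 504*w1^2*w4^2 + 2448*w1*w2^3 + 1728*w1*w2^2*w3 + 1152*w1*w2^2*w4 + 1620*w1*w2*w3^2 + 1872*w1*w2*w3*w4 + 576*w1*w2*w4^2 + 396*w1*w3^3 + 792*w1*w3^2*w4 + 480*w1*w3*w4^2 + 96*w1*w4^3 + 480*w2^4 + 288*w2^3*w3 + 288*w2^3*w4 + 576*w2^2*w3^2 + 672*w2^2*w3*w4 + 240*w2^2*w4^2 + 264*w2*w3^3 + 552*w2*w3^2*w4 + 384*w2*w3*w4^2 + 96*w2*w4^3 + 60*w3^4 + 160*w3^3*w4 + 164*w3^2*w4^2 + 80*w3*w4^3 + 16*w4^4"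
      by (intro add_pos_pos mult_pos_pos zero_less_power) (simp_all add: w1p w2p w3p w4p)
    have "0 < (- (6*U^2*V*a) - 2*U^2*V*b + 15*U^2*a^2 + 12*U^2*a*b + U^2*b^2 + 30*U*V*a^2 + 24*U*V*a*b + 2*U*V*b^2 - 40*U*a^3 - 60*U*a^2*b - 12*U*a*b^2 - 20*V*a^3 - 30*V*a^2*b - 6*V*a*b^2 + 15*a^4 + 40*a^3*b + 15*a^2*b^2)" unfolding key using rp by simp
    then have "0 < (- (6*U^2*V*a) - 2*U^2*V*b + 15*U^2*a^2 + 12*U^2*a*b + U^2*b^2 + 30*U*V*a^2 + 24*U*V*a*b + 2*U*V*b^2 - 40*U*a^3 - 60*U*a^2*b - 12*U*a*b^2 - 20*V*a^3 - 30*V*a^2*b - 6*V*a*b^2 + 15*a^4 + 40*a^3*b + 15*a^2*b^2)" by simp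
    then show False using c7 e7 by simp
  next
    case 2
    define S where "S = 3*U + (V-U)"
    have Sp: "0 < S" using 2 pU pV unfolding S_def by simp
    define iS where "iS = 1/S"
    have iSp: "0 < iS" using Sp unfolding iS_def by simp
    have hS: "S*iS = 1" using Sp unfolding iS_def by simp
    define w1 where "w1 = a*U*iS"
    define w2 where "w2 = a*(V-U)*iS"
    define w3 where "w3 = b*U*iS"
    define w4 where "w4 = b*(V-U)*iS"
    have w1p: "0 < w1" unfolding w1_def using iSp pa pb pU pV 2 by simp
    have w2p: "0 < w2" unfolding w2_def using iSp pa pb pU pV 2 by simp
    have w3p: "0 < w3" unfolding w3_def using iSp pa pb pU pV 2 by simp
    have w4p: "0 < w4" unfolding w4_def using iSp pa pb pU pV 2 by simp
    have ea: "a = 3*w1 + w2" unfolding w1_def w2_def using hS rel unfolding S_def by algebra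
    have eb: "b = 3*w3 + w4" unfolding w3_def w4_def using hS rel unfolding S_def by algebra
    have eV: "V = 6*w1 + 2*w3 + (6*w2 + 2*w4)" unfolding w1_def w2_def w3_def w4_def using hS rel unfolding S_def by algebra
    have eU: "U = 6*w1 + 2*w3" unfolding w1_def w2_def w3_def w4_def using hS rel unfolding S_def by algebra
    have key: "(0 - (- (20*U^2*V*a^3) - 30*U^2*V*a^2*b - 6*U^2*V*a*b^2 + 15*U^2*a^4 + 40*U^2*a^3*b + 15*U^2*a^2*b^2 + 30*U*V*a^4 + 80*U*V*a^3*b + 30*U*V*a^2*b^2 - 12*U*a^5 - 60*U*a^4*b - 40*U*a^3*b^2 - 6*V*a^5 - 30*V*a^4*b - 20*V*a^3*b^2 + a^6 + 12*a^5*b + 15*a^4*b^2)) = ((486/65)*w1^3 + (1836/175)*w1^2*w2 + (594/13)*w1^2*w3 + (72/5)*w1^2*w4 + (56703/1400)*w1*w2^2 + (171753/2275)*w1*w2*w4 + 15*w2^3 + (4558669/72800)*w2^2*w3 + (57251/11375)*w2^2*w4 + (2256/11375)*w2*w3*w4) * ((2*V+U)*a*b - U*V*(6*b+2*a)) + ((815751/65)*w1^6 + (59808618/2275)*w1^5*w2 + (14180832/2275)*w1^4*w2^2 + (1418877/65)*w1^4*w3^2 + (202662/13)*w1^4*w3*w4 + (729/65)*w1^4*w4^2 + (275089419/45500)*w1^3*w2^2*w4 + (45871596/2275)*w1^3*w2*w3^2 + (435663846/11375)*w1^3*w2*w3*w4 + (26271702/2275)*w1^3*w2*w4^2 + (1257012/65)*w1^3*w3^3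 + (1431108/65)*w1^3*w3^2*w4 + (274104/65)*w1^3*w3*w4^2 + (297702/175)*w1^2*w2^4 + (246270537/9100)*w1^2*w2^3*w3 + (335003787/45500)*w1^2*w2^3*w4 + (95700663/2800)*w1^2*w2^2*w3^2 + (9617306913/182000)*w1^2*w2^2*w3*w4 + (297145053/22750)*w1^2*w2^2*w4^2 + (24114996/2275)*w1^2*w2*w3^3 + (347058/13)*w1^2*w2*w3^2*w4 + (221151114/11375)*w1^2*w2*w3*w4^2 + (1739988/455)*w1^2*w2*w4^3 + (89100/13)*w1^2*w3^4 + (661392/65)*w1^2*w3^3*w4 + (196236/65)*w1^2*w3^2*w4^2 + (648/5)*w1^2*w3*w4^3 + 630*w1*w2^5 + (91478187/9100)*w1*w2^4*w3 + (48374559/22750)*w1*w2^4*w4 + (61764399/1456)*w1*w2^3*w3^2 + (2931408993/182000)*w1*w2^3*w3*w4 + (16111317/22750)*w1*w2^3*w4^2 + (177231777/7280)*w1*w2^2*w3^3 + (877555059/26000)*w1*w2^2*w3^2*w4 + (761827863/91000)*w1*w2^2*w3*w4^2 + 2376*w1*w2*w3^4 + (69289992/11375)*w1*w2*w3^3*w4 + (13524984/2275)*w1*w2*w3^2*w4^2 + (3166344/2275)*w1*w2*w3*w4^3 + 1296*w1*w3^5 + 2160*w1*w3^4*w4 + 1008*w1*w3^3*w4^2 + 144*w1*w3^2*w4^3 + 35*w2^6 + (22632993/18200)*w2^4*w3^2 + (366267/13000)*w2^4*w3*w4 + (507363/11375)*w2^4*w4^2 + (462262907/36400)*w2^3*w3^3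 + (858459839/182000)*w2^3*w3^2*w4 + (361063/3640)*w2^3*w3*w4^2 + (225996/11375)*w2^3*w4^3 + (44631621/9100)*w2^2*w3^4 + (69144843/11375)*w2^2*w3^3*w4 + (67445907/45500)*w2^2*w3^2*w4^2 + 432*w2*w3^5 + (8352432/11375)*w2*w3^4*w4 + (4038576/11375)*w2*w3^3*w4^2 + (600144/11375)*w2*w3^2*w4^3)"
      unfolding eU eV ea eb by algebra
    have lp: "0 < (486/65)*w1^3 + (1836/175)*w1^2*w2 + (594/13)*w1^2*w3 + (72/5)*w1^2*w4 + (56703/1400)*w1*w2^2 + (171753/2275)*w1*w2*w4 + 15*w2^3 + (4558669/72800)*w2^2*w3 + (57251/11375)*w2^2*w4 + (2256/11375)*w2*w3*w4"
      by (intro add_pos_pos mult_pos_pos zero_less_power) (simp_all add: w1p w2p w3p w4p)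
    have rp: "0 \<le> (815751/65)*w1^6 + (59808618/2275)*w1^5*w2 + (14180832/2275)*w1^4*w2^2 + (1418877/65)*w1^4*w3^2 + (202662/13)*w1^4*w3*w4 + (729/65)*w1^4*w4^2 + (275089419/45500)*w1^3*w2^2*w4 + (45871596/2275)*w1^3*w2*w3^2 + (435663846/11375)*w1^3*w2*w3*w4 + (26271702/2275)*w1^3*w2*w4^2 + (1257012/65)*w1^3*w3^3 + (1431108/65)*w1^3*w3^2*w4 + (274104/65)*w1^3*w3*w4^2 + (297702/175)*w1^2*w2^4 + (246270537/9100)*w1^2*w2^3*w3 + (335003787/45500)*w1^2*w2^3*w4 + (95700663/2800)*w1^2*w2^2*w3^2 + (9617306913/182000)*w1^2*w2^2*w3*w4 + (297145053/22750)*w1^2*w2^2*w4^2 + (24114996/2275)*w1^2*w2*w3^3 + (347058/13)*w1^2*w2*w3^2*w4 + (221151114/11375)*w1^2*w2*w3*w4^2 + (1739988/455)*w1^2*w2*w4^3 + (89100/13)*w1^2*w3^4 + (661392/65)*w1^2*w3^3*w4 + (196236/65)*w1^2*w3^2*w4^2 + (648/5)*w1^2*w3*w4^3 + 630*w1*w2^5 + (91478187/9100)*w1*w2^4*w3 + (48374559/22750)*w1*w2^4*w4 + (61764399/1456)*w1*w2^3*w3^2 + (2931408993/182000)*w1*w2^3*w3*w4 + (16111317/22750)*w1*w2^3*w4^2 + (177231777/7280)*w1*w2^2*w3^3 + (877555059/26000)*w1*w2^2*w3^2*w4 + (761827863/91000)*w1*w2^2*w3*w4^2 + 2376*w1*w2*w3^4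 + (69289992/11375)*w1*w2*w3^3*w4 + (13524984/2275)*w1*w2*w3^2*w4^2 + (3166344/2275)*w1*w2*w3*w4^3 + 1296*w1*w3^5 + 2160*w1*w3^4*w4 + 1008*w1*w3^3*w4^2 + 144*w1*w3^2*w4^3 + 35*w2^6 + (22632993/18200)*w2^4*w3^2 + (366267/13000)*w2^4*w3*w4 + (507363/11375)*w2^4*w4^2 + (462262907/36400)*w2^3*w3^3 + (858459839/182000)*w2^3*w3^2*w4 + (361063/3640)*w2^3*w3*w4^2 + (225996/11375)*w2^3*w4^3 + (44631621/9100)*w2^2*w3^4 + (69144843/11375)*w2^2*w3^3*w4 + (67445907/45500)*w2^2*w3^2*w4^2 + 432*w2*w3^5 + (8352432/11375)*w2*w3^4*w4 + (4038576/11375)*w2*w3^3*w4^2 + (600144/11375)*w2*w3^2*w4^3"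
      by (intro add_nonneg_nonneg mult_nonneg_nonneg zero_le_power) (simp_all add: w1p w2p w3p w4p less_imp_le)
    have "0 < (0 - (- (20*U^2*V*a^3) - 30*U^2*V*a^2*b - 6*U^2*V*a*b^2 + 15*U^2*a^4 + 40*U^2*a^3*b + 15*U^2*a^2*b^2 + 30*U*V*a^4 + 80*U*V*a^3*b + 30*U*V*a^2*b^2 - 12*U*a^5 - 60*U*a^4*b - 40*U*a^3*b^2 - 6*V*a^5 - 30*V*a^4*b - 20*V*a^3*b^2 + a^6 + 12*a^5*b + 15*a^4*b^2))" unfolding key using lp rp Cpos by (simp add: add_pos_nonneg)
    then have "0 < (0 - (- (20*U^2*V*a^3) - 30*U^2*V*a^2*b - 6*U^2*V*a*b^2 + 15*U^2*a^4 + 40*U^2*a^3*b + 15*U^2*a^2*b^2 + 30*U*V*a^4 + 80*U*V*a^3*b + 30*U*V*a^2*b^2 - 12*U*a^5 - 60*U*a^4*b - 40*U*a^3*b^2 - 6*V*a^5 - 30*V*a^4*b - 20*V*a^3*b^2 + a^6 + 12*a^5*b + 15*a^4*b^2))" by simp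
    then show False using c5 e5 by simp
  next
    case 3
    have "0 < U * (3*(a*b) - U*(6*b+2*a))" using Cpos 3 by (simp add: algebra_simps)
    then have h1: "U*(6*b+2*a) < 3*(a*b)" using pU by (simp add: zero_less_mult_iff)
    have h2: "6*a + 2*b = 3*U" using rel 3 by simp
    have h3: "(6*a+2*b)*(6*b+2*a) = 12*(a-b)^2 + 64*(a*b)" by algebra
    have h4: "(6*a+2*b)*(6*b+2*a) = 3*(U*(6*b+2*a))" unfolding h2 by (simp add: algebra_simps)
    have "0 \<le> (a-b)^2" by simp
    moreover have "0 < a*b" using pa pb by simp
    ultimately show False using h1 h3 h4 by linarith
  qed
qed

lemma core_7:
  fixes U V a b :: real
  assumes pU: "0 < U" and pV: "0 < V" and pa: "0 < a" and pb: "0 < b"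
    and c10: "coeff ([:-U,1:]^2 * [:-V,1:] * [:a,1:]^7 * [:b,1:]^1 :: real poly) 10 = 0"
    and c1: "0 < coeff ([:-U,1:]^2 * [:-V,1:] * [:a,1:]^7 * [:b,1:]^1 :: real poly) 1"
    and c7: "coeff ([:-U,1:]^2 * [:-V,1:] * [:a,1:]^7 * [:b,1:]^1 :: real poly) 7 \<le> 0"
    and c5: "0 \<le> coeff ([:-U,1:]^2 * [:-V,1:] * [:a,1:]^7 * [:b,1:]^1 :: real poly) 5"
  shows False
proof -
  have e10: "coeff ([:-U,1:]^2 * [:-V,1:] * [:a,1:]^7 * [:b,1:]^1 :: real poly) 10 = 7*a + 1*b - 2*U - V"
    by (simp add: eval_nat_numeral; algebra)
  have rel: "7*a + 1*b = 2*U + V" using c10 e10 by simp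
  have e1: "coeff ([:-U,1:]^2 * [:-V,1:] * [:a,1:]^7 * [:b,1:]^1 :: real poly) 1 = U * a^6 * b^0 * ((2*V+U)*a*b - U*V*(7*b+1*a))"
    by (simp add: eval_nat_numeral; algebra)
  have "0 < U * a^6 * b^0" using pU pa pb by simp
  then have Cpos: "0 < ((2*V+U)*a*b - U*V*(7*b+1*a))" using c1 e1 by (metis zero_less_mult_pos)
  have e7: "coeff ([:-U,1:]^2 * [:-V,1:] * [:a,1:]^7 * [:b,1:]^1 :: real poly) 7 = - (7*U^2*V*a) - U^2*V*b + 21*U^2*a^2 + 7*U^2*a*b + 42*U*V*a^2 + 14*U*V*a*b - 70*U*a^3 - 42*U*a^2*b - 35*V*a^3 - 21*V*a^2*b + 35*a^4 + 35*a^3*b"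
    by (simp add: eval_nat_numeral; algebra)
  have e5: "coeff ([:-U,1:]^2 * [:-V,1:] * [:a,1:]^7 * [:b,1:]^1 :: real poly) 5 = - (35*U^2*V*a^3) - 21*U^2*V*a^2*b + 35*U^2*a^4 + 35*U^2*a^3*b + 70*U*V*a^4 + 70*U*V*a^3*b - 42*U*a^5 - 70*U*a^4*b - 21*V*a^5 - 35*V*a^4*b + 7*a^6 + 21*a^5*b"
    by (simp add: eval_nat_numeral; algebra)
  consider "V < U" | "U < V" | "U = V" by linarith
  then show False
  proof cases
    case 1
    define S where "S = 3*V + 2*(U-V)"
    have Sp: "0 < S" using 1 pU pV unfolding S_def by simp
    define iS where "iS = 1/S"
    have iSp: "0 < iS" using Sp unfolding iS_def by simp
    have hS: "S*iS = 1" using Sp unfolding iS_def by simp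
    define w1 where "w1 = a*V*iS"
    define w2 where "w2 = a*(U-V)*iS"
    define w3 where "w3 = b*V*iS"
    define w4 where "w4 = b*(U-V)*iS"
    have w1p: "0 < w1" unfolding w1_def using iSp pa pb pU pV 1 by simp
    have w2p: "0 < w2" unfolding w2_def using iSp pa pb pU pV 1 by simp
    have w3p: "0 < w3" unfolding w3_def using iSp pa pb pU pV 1 by simp
    have w4p: "0 < w4" unfolding w4_def using iSp pa pb pU pV 1 by simp
    have ea: "a = 3*w1 + 2*w2" unfolding w1_def w2_def using hS rel unfolding S_def by algebra
    have eb: "b = 3*w3 + 2*w4" unfolding w3_def w4_def using hS rel unfolding S_def by algebra
    have eV: "V = 7*w1 + 1*w3" unfolding w1_def w2_def w3_def w4_def using hS rel unfolding S_def by algebra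
    have eU: "U = 7*w1 + 1*w3 + (7*w2 + 1*w4)" unfolding w1_def w2_def w3_def w4_def using hS rel unfolding S_def by algebra
    have key: "(- (7*U^2*V*a) - U^2*V*b + 21*U^2*a^2 + 7*U^2*a*b + 42*U*V*a^2 + 14*U*V*a*b - 70*U*a^3 - 42*U*a^2*b - 35*V*a^3 - 21*V*a^2*b + 35*a^4 + 35*a^3*b) = ((1/7)*w3 + (1/7)*w4) * ((2*V+U)*a*b - U*V*(7*b+1*a)) + (3570*w1^4 + 9520*w1^3*w2 + 1197*w1^3*w3 + 805*w1^3*w4 + 8834*w1^2*w2^2 + 2387*w1^2*w2*w3 + 1407*w1^2*w2*w4 + 756*w1^2*w3^2 + 1049*w1^2*w3*w4 + 349*w1^2*w4^2 + 3850*w1*w2^3 + 1239*w1*w2^2*w3 + 798*w1*w2^2*w4 + 967*w1*w2*w3^2 + 1231*w1*w2*w3*w4 + 404*w1*w2*w4^2 + (1005/7)*w1*w3^3 + (2059/7)*w1*w3^2*w4 + (1342/7)*w1*w3*w4^2 + (288/7)*w1*w4^3 + 756*w2^4 + 196*w2^3*w3 + 196*w2^3*w4 + 325*w2^2*w3^2 + 398*w2^2*w3*w4 + 136*w2^2*w4^2 + (621/7)*w2*w3^3 + (1291/7)*w2*w3^2*w4 + (862/7)*w2*w3*w4^2 + (192/7)*w2*w4^3)"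
      unfolding eU eV ea eb by algebra
    have lp: "0 < (1/7)*w3 + (1/7)*w4"
      by (intro add_pos_pos mult_pos_pos zero_less_power) (simp_all add: w1p w2p w3p w4p)
    have rp: "0 \<le> 3570*w1^4 + 9520*w1^3*w2 + 1197*w1^3*w3 + 805*w1^3*w4 + 8834*w1^2*w2^2 + 2387*w1^2*w2*w3 + 1407*w1^2*w2*w4 + 756*w1^2*w3^2 + 1049*w1^2*w3*w4 + 349*w1^2*w4^2 + 3850*w1*w2^3 + 1239*w1*w2^2*w3 + 798*w1*w2^2*w4 + 967*w1*w2*w3^2 + 1231*w1*w2*w3*w4 + 404*w1*w2*w4^2 + (1005/7)*w1*w3^3 + (2059/7)*w1*w3^2*w4 + (1342/7)*w1*w3*w4^2 + (288/7)*w1*w4^3 + 756*w2^4 + 196*w2^3*w3 + 196*w2^3*w4 + 325*w2^2*w3^2 + 398*w2^2*w3*w4 + 136*w2^2*w4^2 + (621/7)*w2*w3^3 + (1291/7)*w2*w3^2*w4 + (862/7)*w2*w3*w4^2 + (192/7)*w2*w4^3"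
      by (intro add_nonneg_nonneg mult_nonneg_nonneg zero_le_power) (simp_all add: w1p w2p w3p w4p less_imp_le)
    have "0 < (- (7*U^2*V*a) - U^2*V*b + 21*U^2*a^2 + 7*U^2*a*b + 42*U*V*a^2 + 14*U*V*a*b - 70*U*a^3 - 42*U*a^2*b - 35*V*a^3 - 21*V*a^2*b + 35*a^4 + 35*a^3*b)" unfolding key using lp rp Cpos by (simp add: add_pos_nonneg)
    then have "0 < (- (7*U^2*V*a) - U^2*V*b + 21*U^2*a^2 + 7*U^2*a*b + 42*U*V*a^2 + 14*U*V*a*b - 70*U*a^3 - 42*U*a^2*b - 35*V*a^3 - 21*V*a^2*b + 35*a^4 + 35*a^3*b)" by simp
    then show False using c7 e7 by simp
  next
    case 2
    define S where "S = 3*U + (V-U)"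
    have Sp: "0 < S" using 2 pU pV unfolding S_def by simp
    define iS where "iS = 1/S"
    have iSp: "0 < iS" using Sp unfolding iS_def by simp
    have hS: "S*iS = 1" using Sp unfolding iS_def by simp
    define w1 where "w1 = a*U*iS"
    define w2 where "w2 = a*(V-U)*iS"
    define w3 where "w3 = b*U*iS"
    define w4 where "w4 = b*(V-U)*iS"
    have w1p: "0 < w1" unfolding w1_def using iSp pa pb pU pV 2 by simp
    have w2p: "0 < w2" unfolding w2_def using iSp pa pb pU pV 2 by simp
    have w3p: "0 < w3" unfolding w3_def using iSp pa pb pU pV 2 by simp
    have w4p: "0 < w4" unfolding w4_def using iSp pa pb pU pV 2 by simp
    have ea: "a = 3*w1 + w2" unfolding w1_def w2_def using hS rel unfolding S_def by algebra
    have eb: "b = 3*w3 + w4" unfolding w3_def w4_def using hS rel unfolding S_def by algebra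
    have eV: "V = 7*w1 + 1*w3 + (7*w2 + 1*w4)" unfolding w1_def w2_def w3_def w4_def using hS rel unfolding S_def by algebra
    have eU: "U = 7*w1 + 1*w3" unfolding w1_def w2_def w3_def w4_def using hS rel unfolding S_def by algebra
    have key: "(0 - (- (35*U^2*V*a^3) - 21*U^2*V*a^2*b + 35*U^2*a^4 + 35*U^2*a^3*b + 70*U*V*a^4 + 70*U*V*a^3*b - 42*U*a^5 - 70*U*a^4*b - 21*V*a^5 - 35*V*a^4*b + 7*a^6 + 21*a^5*b)) * (w1+w2+w3+w4)^2 = ((191/7)*w1^4*w2 + (234/7)*w1^4*w3 + (7911/860)*w1^4*w4 + (78413/364)*w1^3*w2^2 + (16254379/123480)*w1^3*w2*w4 + (360/7)*w1^3*w3^2 + (3679743/21070)*w1^3*w3*w4 + (4563/140)*w1^3*w4^2 + (50038/91)*w1^2*w2^3 + (59209/3822)*w1^2*w2^2*w3 + (20532615461/51768990)*w1^2*w2^2*w4 + (134472/343)*w1^2*w2*w3^2 + (10950067211/111502440)*w1^2*w2*w4^2 + (1243/4)*w1*w2^4 + (11307223/75894)*w1*w2^3*w3 + (15694937441/1061264295)*w1*w2^3*w4 + (2515241/3822)*w1*w2^2*w3^2 + (1365/4)*w1*w2^2*w4^2 + (6363/4)*w1*w2*w3*w4^2 + 15*w2^5 + (1135/28)*w2^4*w3 + (383/14)*w2^4*w4 + (7953/196)*w2^3*w3*w4 + (35/2)*w2^3*w4^2 + (177/28)*w2^2*w3^3 + (984143/6860)*w2^2*w3^2*w4 + (105/4)*w2^2*w3*w4^2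 + (32639/980)*w2*w3^4 + (28906811/48020)*w2*w3^3*w4 + (9017513/120050)*w2*w3^2*w4^2) * ((2*V+U)*a*b - U*V*(7*b+1*a)) + (9450*w1^8 + 41811*w1^7*w2 + (10590237/860)*w1^7*w4 + (1990289/52)*w1^6*w2^2 + (1420253689/36120)*w1^6*w2*w4 + (260307/7)*w1^5*w3^3 + (397163943/3010)*w1^5*w3^2*w4 + (271472073/6020)*w1^5*w3*w4^2 + (6807993983/21684)*w1^4*w2^3*w3 + (1763964498853/173267640)*w1^4*w2^3*w4 + (785461239809/9860760)*w1^4*w2^2*w3*w4 + (1585779149749/29582280)*w1^4*w2^2*w4^2 + (2622534/7)*w1^4*w2*w3^3 + (15788446333/73745)*w1^4*w2*w3^2*w4 + (322774192669/1061928)*w1^4*w2*w3*w4^2 + (1937638688/398223)*w1^4*w2*w4^3 + (174879/7)*w1^4*w3^4 + (3405615399/42140)*w1^4*w3^3*w4 + (653236662/10535)*w1^4*w3^2*w4^2 + (311353347/21070)*w1^4*w3*w4^3 + (37449/140)*w1^4*w4^4 + (91462/13)*w1^3*w2^5 + (5744435345/10842)*w1^3*w2^4*w3 + (1061864833729/12376260)*w1^3*w2^4*w4 + (33571949993/151788)*w1^3*w2^3*w3^2 + (23954546214415247/168589413720)*w1^3*w2^3*w3*w4 + (16420248389105/242574696)*w1^3*w2^3*w4^2 + (555084261/637)*w1^3*w2^2*w3^3 + (18164810828161/69025320)*w1^3*w2^2*w3^2*w4 + (32194658060699/51768990)*w1^3*w2^2*w3*w4^2 + (7201625299837/69025320)*w1^3*w2^2*w4^3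 + (948799851/6860)*w1^3*w2*w3^4 + (81453751613/353976)*w1^3*w2*w3^3*w4 + (34088116614046/23229675)*w1^3*w2*w3^2*w4^2 + (27231207599993/55751220)*w1^3*w2*w3*w4^3 + (2286105359/2593080)*w1^3*w2*w4^4 + 6561*w1^3*w3^5 + (62591499/3010)*w1^3*w3^4*w4 + (130161273/6020)*w1^3*w3^3*w4^2 + (25200039/3010)*w1^3*w3^2*w4^3 + (19683/20)*w1^3*w3*w4^4 + (4347/4)*w1^2*w2^6 + (4640814683/21684)*w1^2*w2^5*w3 + (321856320383/6664140)*w1^2*w2^5*w4 + (19589061785/75894)*w1^2*w2^4*w3^2 + (21100176444742/468303927)*w1^2*w2^4*w3*w4 + (150688940902/265629)*w1^2*w2^3*w3^3 + (5332793968016503/22694728770)*w1^2*w2^3*w3^2*w4 + (421064404406199653/1180125896040)*w1^2*w2^3*w3*w4^2 + (2066518993013/23583651)*w1^2*w2^3*w4^3 + (5553280806/22295)*w1^2*w2^2*w3^4 + (14036375029393/34512660)*w1^2*w2^2*w3^3*w4 + (887223117921257/557512200)*w1^2*w2^2*w3^2*w4^2 + (257804765122123/483177240)*w1^2*w2^2*w3*w4^3 + (181001082061/13937805)*w1^2*w2^2*w4^4 + (21484089/490)*w1^2*w2*w3^5 + (555413597/980)*w1^2*w2*w3^4*w4 + (18385359588889/26548200)*w1^2*w2*w3^3*w4^2 + (15092412380033/39822300)*w1^2*w2*w3^2*w4^3 + (1098516991361/15928920)*w1^2*w2*w3*w4^4 + 567*w1^2*w3^6 + 1890*w1^2*w3^5*w4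 + 2268*w1^2*w3^4*w4^2 + 1134*w1^2*w3^3*w4^3 + 189*w1^2*w3^2*w4^4 + 105*w1*w2^7 + (679494739/10842)*w1*w2^5*w3^2 + (665756554050907/16858941372)*w1*w2^5*w3*w4 + (2309145949561/303218370)*w1*w2^5*w4^2 + (22628128332101723/590062948020)*w1*w2^4*w3^2*w4 + (221749248115181/14391779220)*w1*w2^4*w3*w4^2 + (2285494916701/2122528590)*w1*w2^4*w4^3 + (132130774229/1328145)*w1*w2^3*w3^4 + (1051555242130147/5619647124)*w1*w2^3*w3^3*w4 + (25100189605683607/421473534300)*w1*w2^3*w3^2*w4^2 + (543557227919/606436740)*w1*w2^3*w3*w4^3 + (17107911/364)*w1*w2^2*w3^5 + (22912330877/38220)*w1*w2^2*w3^4*w4 + (137086521191/267540)*w1*w2^2*w3^3*w4^2 + (527292573/4900)*w1*w2^2*w3^2*w4^3 + (918297/98)*w1*w2*w3^6 + (8218791901/48020)*w1*w2*w3^5*w4 + (9107817363/48020)*w1*w2*w3^4*w4^2 + (21076514811/240100)*w1*w2*w3^3*w4^3 + (3479332243/240100)*w1*w2*w3^2*w4^4 + 140*w2^8 + 315*w2^7*w4 + (1125/4)*w2^6*w3^2 + 252*w2^6*w4^2 + (121113/28)*w2^5*w3^3 + (16355/7)*w2^5*w3^2*w4 + (107/7)*w2^5*w4^3 + (150609/980)*w2^4*w3^2*w4^2 + (1977/49)*w2^4*w3*w4^3 + (4815009/17150)*w2^3*w3^2*w4^3 + (1182164/245)*w2^2*w3^6 + (4246871241/48020)*w2^2*w3^5*w4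 + (9584716649/240100)*w2^2*w3^4*w4^2 + (898209091/240100)*w2^2*w3^3*w4^3 + (13090423/240100)*w2^2*w3^2*w4^4 + (97917/140)*w2*w3^7 + (93117677/6860)*w2*w3^6*w4 + (640237853/34300)*w2*w3^5*w4^2 + (216674159/34300)*w2*w3^4*w4^3 + (9017513/17150)*w2*w3^3*w4^4)"
      unfolding eU eV ea eb by algebra
    have lp: "0 < (191/7)*w1^4*w2 + (234/7)*w1^4*w3 + (7911/860)*w1^4*w4 + (78413/364)*w1^3*w2^2 + (16254379/123480)*w1^3*w2*w4 + (360/7)*w1^3*w3^2 + (3679743/21070)*w1^3*w3*w4 + (4563/140)*w1^3*w4^2 + (50038/91)*w1^2*w2^3 + (59209/3822)*w1^2*w2^2*w3 + (20532615461/51768990)*w1^2*w2^2*w4 + (134472/343)*w1^2*w2*w3^2 + (10950067211/111502440)*w1^2*w2*w4^2 + (1243/4)*w1*w2^4 + (11307223/75894)*w1*w2^3*w3 + (15694937441/1061264295)*w1*w2^3*w4 + (2515241/3822)*w1*w2^2*w3^2 + (1365/4)*w1*w2^2*w4^2 + (6363/4)*w1*w2*w3*w4^2 + 15*w2^5 + (1135/28)*w2^4*w3 + (383/14)*w2^4*w4 + (7953/196)*w2^3*w3*w4 + (35/2)*w2^3*w4^2 + (177/28)*w2^2*w3^3 + (984143/6860)*w2^2*w3^2*w4 + (105/4)*w2^2*w3*w4^2 + (32639/980)*w2*w3^4 + (28906811/48020)*w2*w3^3*w4 + (9017513/120050)*w2*w3^2*w4^2"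
      by (intro add_pos_pos mult_pos_pos zero_less_power) (simp_all add: w1p w2p w3p w4p)
    have rp: "0 \<le> 9450*w1^8 + 41811*w1^7*w2 + (10590237/860)*w1^7*w4 + (1990289/52)*w1^6*w2^2 + (1420253689/36120)*w1^6*w2*w4 + (260307/7)*w1^5*w3^3 + (397163943/3010)*w1^5*w3^2*w4 + (271472073/6020)*w1^5*w3*w4^2 + (6807993983/21684)*w1^4*w2^3*w3 + (1763964498853/173267640)*w1^4*w2^3*w4 + (785461239809/9860760)*w1^4*w2^2*w3*w4 + (1585779149749/29582280)*w1^4*w2^2*w4^2 + (2622534/7)*w1^4*w2*w3^3 + (15788446333/73745)*w1^4*w2*w3^2*w4 + (322774192669/1061928)*w1^4*w2*w3*w4^2 + (1937638688/398223)*w1^4*w2*w4^3 + (174879/7)*w1^4*w3^4 + (3405615399/42140)*w1^4*w3^3*w4 + (653236662/10535)*w1^4*w3^2*w4^2 + (311353347/21070)*w1^4*w3*w4^3 + (37449/140)*w1^4*w4^4 + (91462/13)*w1^3*w2^5 + (5744435345/10842)*w1^3*w2^4*w3 + (1061864833729/12376260)*w1^3*w2^4*w4 + (33571949993/151788)*w1^3*w2^3*w3^2 + (23954546214415247/168589413720)*w1^3*w2^3*w3*w4 + (16420248389105/242574696)*w1^3*w2^3*w4^2 + (555084261/637)*w1^3*w2^2*w3^3 + (18164810828161/69025320)*w1^3*w2^2*w3^2*w4 + (32194658060699/51768990)*w1^3*w2^2*w3*w4^2 + (7201625299837/69025320)*w1^3*w2^2*w4^3 + (948799851/6860)*w1^3*w2*w3^4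 + (81453751613/353976)*w1^3*w2*w3^3*w4 + (34088116614046/23229675)*w1^3*w2*w3^2*w4^2 + (27231207599993/55751220)*w1^3*w2*w3*w4^3 + (2286105359/2593080)*w1^3*w2*w4^4 + 6561*w1^3*w3^5 + (62591499/3010)*w1^3*w3^4*w4 + (130161273/6020)*w1^3*w3^3*w4^2 + (25200039/3010)*w1^3*w3^2*w4^3 + (19683/20)*w1^3*w3*w4^4 + (4347/4)*w1^2*w2^6 + (4640814683/21684)*w1^2*w2^5*w3 + (321856320383/6664140)*w1^2*w2^5*w4 + (19589061785/75894)*w1^2*w2^4*w3^2 + (21100176444742/468303927)*w1^2*w2^4*w3*w4 + (150688940902/265629)*w1^2*w2^3*w3^3 + (5332793968016503/22694728770)*w1^2*w2^3*w3^2*w4 + (421064404406199653/1180125896040)*w1^2*w2^3*w3*w4^2 + (2066518993013/23583651)*w1^2*w2^3*w4^3 + (5553280806/22295)*w1^2*w2^2*w3^4 + (14036375029393/34512660)*w1^2*w2^2*w3^3*w4 + (887223117921257/557512200)*w1^2*w2^2*w3^2*w4^2 + (257804765122123/483177240)*w1^2*w2^2*w3*w4^3 + (181001082061/13937805)*w1^2*w2^2*w4^4 + (21484089/490)*w1^2*w2*w3^5 + (555413597/980)*w1^2*w2*w3^4*w4 + (18385359588889/26548200)*w1^2*w2*w3^3*w4^2 + (15092412380033/39822300)*w1^2*w2*w3^2*w4^3 + (1098516991361/15928920)*w1^2*w2*w3*w4^4 + 567*w1^2*w3^6 + 1890*w1^2*w3^5*w4 + 2268*w1^2*w3^4*w4^2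 + 1134*w1^2*w3^3*w4^3 + 189*w1^2*w3^2*w4^4 + 105*w1*w2^7 + (679494739/10842)*w1*w2^5*w3^2 + (665756554050907/16858941372)*w1*w2^5*w3*w4 + (2309145949561/303218370)*w1*w2^5*w4^2 + (22628128332101723/590062948020)*w1*w2^4*w3^2*w4 + (221749248115181/14391779220)*w1*w2^4*w3*w4^2 + (2285494916701/2122528590)*w1*w2^4*w4^3 + (132130774229/1328145)*w1*w2^3*w3^4 + (1051555242130147/5619647124)*w1*w2^3*w3^3*w4 + (25100189605683607/421473534300)*w1*w2^3*w3^2*w4^2 + (543557227919/606436740)*w1*w2^3*w3*w4^3 + (17107911/364)*w1*w2^2*w3^5 + (22912330877/38220)*w1*w2^2*w3^4*w4 + (137086521191/267540)*w1*w2^2*w3^3*w4^2 + (527292573/4900)*w1*w2^2*w3^2*w4^3 + (918297/98)*w1*w2*w3^6 + (8218791901/48020)*w1*w2*w3^5*w4 + (9107817363/48020)*w1*w2*w3^4*w4^2 + (21076514811/240100)*w1*w2*w3^3*w4^3 + (3479332243/240100)*w1*w2*w3^2*w4^4 + 140*w2^8 + 315*w2^7*w4 + (1125/4)*w2^6*w3^2 + 252*w2^6*w4^2 + (121113/28)*w2^5*w3^3 + (16355/7)*w2^5*w3^2*w4 + (107/7)*w2^5*w4^3 + (150609/980)*w2^4*w3^2*w4^2 + (1977/49)*w2^4*w3*w4^3 + (4815009/17150)*w2^3*w3^2*w4^3 + (1182164/245)*w2^2*w3^6 + (4246871241/48020)*w2^2*w3^5*w4 + (9584716649/240100)*w2^2*w3^4*w4^2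 + (898209091/240100)*w2^2*w3^3*w4^3 + (13090423/240100)*w2^2*w3^2*w4^4 + (97917/140)*w2*w3^7 + (93117677/6860)*w2*w3^6*w4 + (640237853/34300)*w2*w3^5*w4^2 + (216674159/34300)*w2*w3^4*w4^3 + (9017513/17150)*w2*w3^3*w4^4"
      by (intro add_nonneg_nonneg mult_nonneg_nonneg zero_le_power) (simp_all add: w1p w2p w3p w4p less_imp_le)
    have "0 < (0 - (- (35*U^2*V*a^3) - 21*U^2*V*a^2*b + 35*U^2*a^4 + 35*U^2*a^3*b + 70*U*V*a^4 + 70*U*V*a^3*b - 42*U*a^5 - 70*U*a^4*b - 21*V*a^5 - 35*V*a^4*b + 7*a^6 + 21*a^5*b)) * (w1+w2+w3+w4)^2" unfolding key using lp rp Cpos by (simp add: add_pos_nonneg)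
    moreover have "0 < (w1+w2+w3+w4)^2" using w1p w2p w3p w4p by simp
    ultimately have "0 < (0 - (- (35*U^2*V*a^3) - 21*U^2*V*a^2*b + 35*U^2*a^4 + 35*U^2*a^3*b + 70*U*V*a^4 + 70*U*V*a^3*b - 42*U*a^5 - 70*U*a^4*b - 21*V*a^5 - 35*V*a^4*b + 7*a^6 + 21*a^5*b))" by (simp add: zero_less_mult_iff)
    then show False using c5 e5 by simp
  next
    case 3
    have "0 < U * (3*(a*b) - U*(7*b+1*a))" using Cpos 3 by (simp add: algebra_simps)
    then have h1: "U*(7*b+1*a) < 3*(a*b)" using pU by (simp add: zero_less_mult_iff)
    have h2: "7*a + 1*b = 3*U" using rel 3 by simp
    have h3: "(7*a+1*b)*(7*b+1*a) = 7*(a-b)^2 + 64*(a*b)" by algebra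
    have h4: "(7*a+1*b)*(7*b+1*a) = 3*(U*(7*b+1*a))" unfolding h2 by (simp add: algebra_simps)
    have "0 \<le> (a-b)^2" by simp
    moreover have "0 < a*b" using pa pb by simp
    ultimately show False using h1 h3 h4 by linarith
  qed
qed



lemma coeff_Pa: "coeff (Pa a) j = (if j = 11 then 1 else if j = 10 then -1 else if j < 10 then coef a j else 0)"
  unfolding Pa_def by (auto simp: coeff_sum)

lemma closed_ge: "closed {x::real^10. 0 \<le> coef x j}"
  unfolding coef_def by (intro closed_Collect_le continuous_intros)
lemma closed_le: "closed {x::real^10. coef x j \<le> 0}"
  unfolding coef_def by (intro closed_Collect_le continuous_intros)

lemma transfer_sign:
  fixes c x y :: real
  assumes "c < 0" "y = c * x"
  shows "0 \<le> y \<Longrightarrow> x \<le> 0" and "y \<le> 0 \<Longrightarrow> 0 \<le> x" and "y < 0 \<Longrightarrow> 0 < x" and "y = 0 \<Longrightarrow> x = 0"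
  using assms by (auto simp: mult_le_0_iff zero_le_mult_iff mult_less_0_iff)

theorem lemma13:
  fixes \<Gamma> :: "(real^10) set"
  assumes "Tset \<noteq> {}"
    and "\<Gamma> \<in> components Tset"
  shows "\<not> (\<exists>a \<in> closure \<Gamma>. all_roots_real (Pa a)
            \<and> (\<exists>u v. u > 0 \<and> v > 0 \<and> u \<noteq> v
                   \<and> poly (Pa a) u = 0 \<and> order u (Pa a) = 2
                   \<and> poly (Pa a) v = 0 \<and> order v (Pa a) = 1)
            \<and> (\<exists>s t. s < 0 \<and> t < 0 \<and> s \<noteq> t
                   \<and> {x::real. x < 0 \<and> poly (Pa a) x = 0} = {s, t}
                   \<and> order s (Pa a) + order t (Pa a) = 8)
            \<and> ((coef a 1 = 0 \<and> coef a 5 = 0) \<or> (coef a 1 = 0 \<and> coef a 6 = 0)))"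
proof
  assume "\<exists>a \<in> closure \<Gamma>. all_roots_real (Pa a)
            \<and> (\<exists>u v. u > 0 \<and> v > 0 \<and> u \<noteq> v
                   \<and> poly (Pa a) u = 0 \<and> order u (Pa a) = 2
                   \<and> poly (Pa a) v = 0 \<and> order v (Pa a) = 1)
            \<and> (\<exists>s t. s < 0 \<and> t < 0 \<and> s \<noteq> t
                   \<and> {x::real. x < 0 \<and> poly (Pa a) x = 0} = {s, t}
                   \<and> order s (Pa a) + order t (Pa a) = 8)
            \<and> ((coef a 1 = 0 \<and> coef a 5 = 0) \<or> (coef a 1 = 0 \<and> coef a 6 = 0))"
  then obtain a u v s t where aG: "a \<in> closure \<Gamma>"
    and u: "u > 0" "poly (Pa a) u = 0" "order u (Pa a) = 2"
    and v: "v > 0" "poly (Pa a) v = 0" "order v (Pa a) = 1" and uv: "u \<noteq> v"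
    and s: "s < 0" and t: "t < 0" and st: "s \<noteq> t"
    and sset: "{x::real. x < 0 \<and> poly (Pa a) x = 0} = {s, t}"
    and o8: "order s (Pa a) + order t (Pa a) = 8"
    and a1: "coef a 1 = 0"
    by blast
  have GT: "\<Gamma> \<subseteq> Tset" using assms(2) by (rule in_components_subset)
  have "Tset \<subseteq> {x. 0 \<le> coef x 4}" unfolding Tset_def by (auto intro: less_imp_le)
  then have "closure \<Gamma> \<subseteq> {x. 0 \<le> coef x 4}"
    using GT by (intro closure_minimal closed_ge) auto
  then have a4: "0 \<le> coef a 4" using aG by auto
  have "Tset \<subseteq> {x. coef x 6 \<le> 0}" unfolding Tset_def by (auto intro: less_imp_le)
  then have "closure \<Gamma> \<subseteq> {x. coef x 6 \<le> 0}"
    using GT by (intro closure_minimal closed_le) auto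
  then have a6: "coef a 6 \<le> 0" using aG by auto
  define p where "p = Pa a"
  have cp: "\<And>j. coeff p j = (if j = 11 then 1 else if j = 10 then -1 else if j < 10 then coef a j else 0)"
    unfolding p_def by (rule coeff_Pa)
  have lc: "coeff p 11 = 1" using cp by simp
  have p0: "p \<noteq> 0" using lc by auto
  have dg: "degree p = 11"
  proof (rule antisym)
    show "degree p \<le> 11" by (rule degree_le) (simp add: cp)
    show "11 \<le> degree p" by (rule le_degree) (simp add: lc)
  qed
  define k where "k = order s p"
  define l where "l = order t p"
  have sroot: "poly p s = 0" using sset unfolding p_def by blast
  have troot: "poly p t = 0" using sset unfolding p_def by blast
  have k1: "k \<ge> 1" using sroot p0 order_gt_0_iff[of p s] unfolding k_def by simp
  have l1: "l \<ge> 1" using troot p0 order_gt_0_iff[of p t] unfolding l_def by simp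
  have kl: "k + l = 8" using o8 unfolding k_def l_def p_def .
  have pfac: "p = [:-u,1:]^2 * [:-v,1:] * [:-s,1:]^k * [:-t,1:]^l"
    by (rule factor4[OF p0 dg lc _ _ k_def[symmetric] l_def[symmetric] kl])
       (use u v uv s t st in \<open>auto simp: p_def\<close>)
  have nz: "u \<noteq> 0" "v \<noteq> 0" "s \<noteq> 0" "t \<noteq> 0" using u v s t by auto
  define c where "c = (-u)^2 * (-v) * (-s)^k * (-t)^l"
  define Q where "Q = [:-(1/u),1:]^2 * [:-(1/v),1:] * [:-(1/s),1:]^k * [:-(1/t),1:]^l"
  have cneg: "c < 0"
  proof -
    have "0 < (-u)^2 * (-s)^k * (-t)^l" using u s t by simp
    then show ?thesis unfolding c_def using v by (simp add: mult_ac mult_pos_neg)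
  qed
  have "reflect_poly p = [:1,-u:]^2 * [:1,-v:] * [:1,-s:]^k * [:1,-t:]^l"
    unfolding pfac by (simp only: reflect_poly_mult reflect_poly_power reflect_lin)
  also have "\<dots> = (smult (-u) [:-(1/u),1:])^2 * smult (-v) [:-(1/v),1:] * (smult (-s) [:-(1/s),1:])^k
      * (smult (-t) [:-(1/t),1:])^l"
    by (simp only: lin_smult[OF nz(1)] lin_smult[OF nz(2)] lin_smult[OF nz(3)] lin_smult[OF nz(4)])
  also have "\<dots> = smult c Q"
    unfolding c_def Q_def
    apply (simp only: smult_power mult_smult_left mult_smult_right smult_smult mult.assoc)
    apply (rule arg_cong2[where f=smult])
     apply (simp only: mult_ac)
    apply (rule refl)
    done
  finally have rp: "reflect_poly p = smult c Q" .
  have cr: "\<And>j. j \<le> 11 \<Longrightarrow> coeff p (11 - j) = c * coeff Q j"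
  proof -
    fix j :: nat assume "j \<le> 11"
    then have "coeff (reflect_poly p) j = coeff p (11 - j)" using dg by (simp add: coeff_reflect_poly)
    then show "coeff p (11 - j) = c * coeff Q j" using rp by simp
  qed
  have q10: "coeff Q 10 = 0" using transfer_sign(4)[OF cneg cr[of 10]] cp a1 by simp
  have q1: "0 < coeff Q 1" using transfer_sign(3)[OF cneg cr[of 1]] cp by simp
  have q7: "coeff Q 7 \<le> 0" using transfer_sign(1)[OF cneg cr[of 7]] cp a4 by simp
  have q5: "0 \<le> coeff Q 5" using transfer_sign(2)[OF cneg cr[of 5]] cp a6 by simp
  have pos: "0 < 1/u" "0 < 1/v" "0 < -(1/s)" "0 < -(1/t)" using u v s t by auto
  have "k \<in> {1..7}" using k1 l1 kl by auto
  then have "k = 1 \<or> k = 2 \<or> k = 3 \<or> k = 4 \<or> k = 5 \<or> k = 6 \<or> k = 7" by auto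
  then show False
  proof (elim disjE)
    assume kk: "k = 1"
    then have ll: "l = 7" using kl by simp
    show False using core_1[OF pos] q10 q1 q7 q5 unfolding Q_def kk ll by simp
  next
    assume kk: "k = 2"
    then have ll: "l = 6" using kl by simp
    show False using core_2[OF pos] q10 q1 q7 q5 unfolding Q_def kk ll by simp
  next
    assume kk: "k = 3"
    then have ll: "l = 5" using kl by simp
    show False using core_3[OF pos] q10 q1 q7 q5 unfolding Q_def kk ll by simp
  next
    assume kk: "k = 4"
    then have ll: "l = 4" using kl by simp
    show False using core_4[OF pos] q10 q1 q7 q5 unfolding Q_def kk ll by simp
  next
    assume kk: "k = 5"
    then have ll: "l = 3" using kl by simp
    show False using core_5[OF pos] q10 q1 q7 q5 unfolding Q_def kk ll by simp
  next
    assume kk: "k = 6"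
    then have ll: "l = 2" using kl by simp
    show False using core_6[OF pos] q10 q1 q7 q5 unfolding Q_def kk ll by simp
  next
    assume kk: "k = 7"
    then have ll: "l = 1" using kl by simp
    show False using core_7[OF pos] q10 q1 q7 q5 unfolding Q_def kk ll by simp
  qed
qed
end
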